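(* Assume Non-Degeneracy Assumption I. Let $(B_1,\dots,B_N;\mathcal{K}_0,\mathcal{J}_0,\mathcal{K}_{N+1},\mathcal{J}_{N+1})$ be a base sequence, and let the boundary values $\mathbf{u}^0,\mathbf{u}^N,x^0,\mathbf{x}^N,\mathbf{p}^0,\mathbf{p}^N,q^N,\mathbf{q}^0$ and interval lengths $\tau_1,\dots,\tau_N$ form a solution of the base-sequence system (a)–(e). Suppose that all boundary values $\mathbf{u}^0,\mathbf{u}^N,x^0,\mathbf{x}^N,\mathbf{p}^0,\mathbf{p}^N,q^N,\mathbf{q}^0$ are $\ge 0$, all $\tau_n\ge 0$, and all breakpoint state values $x^n$ and $q^n$, $n=0,1,\dots,N$, are $\ge 0$. Then the constructed functions $U$ and $P$ are optimal solutions of M-CLP and M-CLP$^*$ respectively.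
   Context: Let $A$ be a real $K\times J$ matrix, $\beta,b\in\mathbb{R}^K$, $\gamma,c\in\mathbb{R}^J$, $T>0$. M-CLP is the problem: maximize $\int_{0-}^T(\gamma+(T-t)c)^\top dU(t)$ (Lebesgue–Stieltjes, the jump $U(0)$ at $0$ included) over $U:[0,T]\to\mathbb{R}^J$ that are nonnegative, non-decreasing and right-continuous with $U(0-)=0$, subject to $AU(t)\le\beta+bt$ for all $0\le t\le T$. Its symmetric dual M-CLP$^*$ is: minimize $\int_{0-}^T(\beta+(T-t)b)^\top dP(t)$ over $P:[0,T]\to\mathbb{R}^K$ nonnegative, non-decreasing, right-continuous with $P(0-)=0$, subject to $A^\top P(t)\ge\gamma+ct$ for all $0\le t\le T$. The primal and dual states (slacks) are $x(t)=\beta+bt-AU(t)$ and $q(t)=A^\top P(t)-\gamma-ct$; the dual is viewed as running in reversed time ($P(T-t)$ corresponds to $U(t)$). Non-Degeneracy Assumption I: $b$ is not a linear combination of fewer than $K$ columns of the matrix $[A\ I]$, and $c$ is not a linear combination of fewer than $J$ columns of $[A^\top\ I]$. Bases (of the Rates-LP). Consider the systems $Au+\dot x=b$ (unknowns $u\in\mathbb{R}^J,\dot x\in\mathbb{R}^K$) and $A^\top p-\dot q=c$ (unknowns $p\in\mathbb{R}^K,\dot q\in\mathbb{R}^J$). A basis $B$ is given by index sets $\mathcal{K}\subseteq\{1,\dots,K\}$, $\mathcal{J}\subseteq\{1,\dots,J\}$ such that the primal basic variables $\dot x_k$ ($k\in\mathcal{K}$) and $u_j$ ($j\notin\mathcal{J}$)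 are $K$ in number with linearly independent columns in $[A\ I]$. Its primal basic solution is the unique solution of $Au+\dot x=b$ with $u_j=0$ ($j\in\mathcal{J}$), $\dot x_k=0$ ($k\notin\mathcal{K}$); its complementary dual basic solution is the unique solution of $A^\top p-\dot q=c$ with $p_k=0$ ($k\in\mathcal{K}$), $\dot q_j=0$ ($j\notin\mathcal{J}$) (dual basic variables $p_k$, $k\notin\mathcal{K}$, and $\dot q_j$, $j\in\mathcal{J}$). $B$ is admissible if $u\ge0$ and $p\ge0$. Bases $B_n,B_{n+1}$ are adjacent if one is obtained from the other by a single pivot: one primal basic variable $v_n$ leaves and one variable $w_n$ enters. Base sequence: an integer $N\ge1$, admissible bases $B_1,\dots,B_N$ with index sets $(\mathcal{K}_n,\mathcal{J}_n)$, $B_n$ and $B_{n+1}$ adjacent for $n=1,\dots,N-1$, with primal/dual basic solutions (rates) $u^n,\dot x^n,p^n,\dot q^n$; together with index sets $\mathcal{K}_0,\mathcal{K}_{N+1}\subseteq\{1,\dots,K\}$, $\mathcal{J}_0,\mathcal{J}_{N+1}\subseteq\{1,\dots,J\}$ satisfying the compatibility conditions $\mathcal{K}_0\subseteq\mathcal{K}_1$ and $\mathcal{J}_{N+1}\subseteq\mathcal{J}_N$. Base-sequence system. Unknowns: $\mathbf{u}^0,\mathbf{u}^N,q^N,\mathbf{q}^0\in\mathbb{R}^J$, $x^0,\mathbf{x}^N,\mathbf{p}^0,\mathbf{p}^N\in\mathbb{R}^K$, $\tau_1,\dots,\tau_N\in\mathbb{R}$. Write $x^n=x^0+\sum_{m=1}^n\dot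 x^m\tau_m$ and $q^n=q^N+\sum_{m=n+1}^N\dot q^m\tau_m$ for $n=0,\dots,N$. Equations: (a) for $n=1,\dots,N-1$: if $v_n=\dot x_k$ then $x^n_k=0$; if $v_n=u_j$ then $q^n_j=0$; (b) $\sum_{n=1}^N\tau_n=T$; (c) $\mathbf{u}^0_j=0$ for $j\in\mathcal{J}_0$, $x^0_k=0$ for $k\notin\mathcal{K}_0$, $\mathbf{p}^0_k=0$ for $k\in\mathcal{K}_0$, $\mathbf{q}^0_j=0$ for $j\notin\mathcal{J}_0$, $\mathbf{p}^N_k=0$ for $k\in\mathcal{K}_{N+1}$, $q^N_j=0$ for $j\notin\mathcal{J}_{N+1}$, $\mathbf{u}^N_j=0$ for $j\in\mathcal{J}_{N+1}$, $\mathbf{x}^N_k=0$ for $k\notin\mathcal{K}_{N+1}$; (d) $A\mathbf{u}^0+x^0=\beta$, $A^\top\mathbf{p}^N-q^N=\gamma$; (e) $A\mathbf{u}^N+\mathbf{x}^N-x^N=0$, $A^\top\mathbf{p}^0-\mathbf{q}^0+q^0=0$. Constructed functions: $t_0=0$, $t_n=\tau_1+\dots+\tau_n$; $u(t)=u^n$ for $t\in(t_{n-1},t_n)$; $U(t)=\mathbf{u}^0+\int_0^tu(s)ds$ for $0\le t<T$, $U(T)=\mathbf{u}^0+\int_0^Tu(s)ds+\mathbf{u}^N$; $p(s)=p^n$ for $s\in(T-t_n,T-t_{n-1})$; $P(s)=\mathbf{p}^N+\int_0^sp(r)dr$ for $0\le s<T$, $P(T)=\mathbf{p}^N+\int_0^Tp(r)dr+\mathbf{p}^0$.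 *)

theory Defs
  imports "HOL-Analysis.Analysis"
begin

(* Conventions: the K x J matrix A is  A :: real^'j^'k  (rows indexed by the finite
   type 'k with CARD('k) = K, columns by 'j with CARD('j) = J). *)

(* column of [A I]: Inl j = column j of A (variable u_j), Inr k = unit vector e_k (variable xdot_k) *)
definition colP :: "real^'j^'k \<Rightarrow> 'j + 'k \<Rightarrow> real^'k" where
  "colP A v = (case v of Inl j \<Rightarrow> (\<chi> k. A $ k $ j) | Inr k \<Rightarrow> axis k 1)"

definition colD :: "real^'j^'k \<Rightarrow> 'k + 'j \<Rightarrow> real^'j" where
  "colD A v = (case v of Inl k \<Rightarrow> (\<chi> j. A $ k $ j) | Inr j \<Rightarrow> axis j 1)"

definition nondeg_I :: "real^'j^'k \<Rightarrow> real^'k \<Rightarrow> real^'j \<Rightarrow> bool" where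
  "nondeg_I A b c \<longleftrightarrow>
     (\<forall>S :: ('j + 'k) set. card S < CARD('k) \<longrightarrow> b \<notin> span (colP A ` S)) \<and>
     (\<forall>S :: ('k + 'j) set. card S < CARD('j) \<longrightarrow> c \<notin> span (colD A ` S))"

(* primal basic variables: u_j (j \<notin> \<J>) as Inl j, xdot_k (k \<in> \<K>) as Inr k *)
definition basic_vars :: "'k set \<Rightarrow> 'j set \<Rightarrow> ('j + 'k) set" where
  "basic_vars Ks Js = Inl ` (UNIV - Js) \<union> Inr ` Ks"

definition is_basis :: "real^'j^'k \<Rightarrow> 'k set \<Rightarrow> 'j set \<Rightarrow> bool" where
  "is_basis A Ks Js \<longleftrightarrow>
     card (basic_vars Ks Js) = CARD('k) \<and>
     inj_on (colP A) (basic_vars Ks Js) \<and>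
     independent (colP A ` basic_vars Ks Js)"

definition primal_basic_sol ::
  "real^'j^'k \<Rightarrow> real^'k \<Rightarrow> 'k set \<Rightarrow> 'j set \<Rightarrow> real^'j \<Rightarrow> real^'k \<Rightarrow> bool" where
  "primal_basic_sol A b Ks Js u xd \<longleftrightarrow>
     A *v u + xd = b \<and> (\<forall>j\<in>Js. u $ j = 0) \<and> (\<forall>k. k \<notin> Ks \<longrightarrow> xd $ k = 0)"

definition dual_basic_sol ::
  "real^'j^'k \<Rightarrow> real^'j \<Rightarrow> 'k set \<Rightarrow> 'j set \<Rightarrow> real^'k \<Rightarrow> real^'j \<Rightarrow> bool" where
  "dual_basic_sol A c Ks Js p qd \<longleftrightarrow>
     transpose A *v p - qd = c \<and> (\<forall>k\<in>Ks. p $ k = 0) \<and> (\<forall>j. j \<notin> Js \<longrightarrow> qd $ j = 0)"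

definition adjacent :: "'k set \<Rightarrow> 'j set \<Rightarrow> 'k set \<Rightarrow> 'j set \<Rightarrow> bool" where
  "adjacent K1 J1 K2 J2 \<longleftrightarrow>
     (\<exists>v w. v \<in> basic_vars K1 J1 \<and> w \<notin> basic_vars K1 J1 \<and>
            basic_vars K2 J2 = insert w (basic_vars K1 J1 - {v}))"

(* distribution function of the Lebesgue-Stieltjes measure dF on [0-,T]:
   F(t) = 0 for t < 0 (so U(0-) = 0 and the jump U(0) at 0 is an atom), constant after T *)
definition ls_ext :: "real \<Rightarrow> (real \<Rightarrow> real) \<Rightarrow> real \<Rightarrow> real" where
  "ls_ext T f t = (if t < 0 then 0 else if t \<le> T then f t else f T)"

definition ls_integral :: "real \<Rightarrow> (real \<Rightarrow> real) \<Rightarrow> (real \<Rightarrow> real) \<Rightarrow> real" where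
  "ls_integral T f g = integral\<^sup>L (interval_measure (ls_ext T f)) (\<lambda>t. indicator {0..T} t * g t)"

definition mclp_feasible :: "real^'j^'k \<Rightarrow> real^'k \<Rightarrow> real^'k \<Rightarrow> real \<Rightarrow> (real \<Rightarrow> real^'j) \<Rightarrow> bool" where
  "mclp_feasible A \<beta> b T U \<longleftrightarrow>
     (\<forall>t\<in>{0..T}. 0 \<le> U t) \<and>
     (\<forall>s t. 0 \<le> s \<longrightarrow> s \<le> t \<longrightarrow> t \<le> T \<longrightarrow> U s \<le> U t) \<and>
     (\<forall>t\<in>{0..<T}. continuous (at_right t) U) \<and>
     (\<forall>t\<in>{0..T}. A *v U t \<le> \<beta> + t *\<^sub>R b)"

definition mclp_obj :: "real^'j \<Rightarrow> real^'j \<Rightarrow> real \<Rightarrow> (real \<Rightarrow> real^'j) \<Rightarrow> real" where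
  "mclp_obj \<gamma> c T U = (\<Sum>j\<in>UNIV. ls_integral T (\<lambda>t. U t $ j) (\<lambda>t. \<gamma> $ j + (T - t) * c $ j))"

definition mclp_optimal ::
  "real^'j^'k \<Rightarrow> real^'k \<Rightarrow> real^'k \<Rightarrow> real^'j \<Rightarrow> real^'j \<Rightarrow> real \<Rightarrow> (real \<Rightarrow> real^'j) \<Rightarrow> bool" where
  "mclp_optimal A \<beta> b \<gamma> c T U \<longleftrightarrow>
     mclp_feasible A \<beta> b T U \<and>
     (\<forall>U'. mclp_feasible A \<beta> b T U' \<longrightarrow> mclp_obj \<gamma> c T U' \<le> mclp_obj \<gamma> c T U)"

definition mclp_dual_feasible :: "real^'j^'k \<Rightarrow> real^'j \<Rightarrow> real^'j \<Rightarrow> real \<Rightarrow> (real \<Rightarrow> real^'k) \<Rightarrow> bool" where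
  "mclp_dual_feasible A \<gamma> c T P \<longleftrightarrow>
     (\<forall>t\<in>{0..T}. 0 \<le> P t) \<and>
     (\<forall>s t. 0 \<le> s \<longrightarrow> s \<le> t \<longrightarrow> t \<le> T \<longrightarrow> P s \<le> P t) \<and>
     (\<forall>t\<in>{0..<T}. continuous (at_right t) P) \<and>
     (\<forall>t\<in>{0..T}. \<gamma> + t *\<^sub>R c \<le> transpose A *v P t)"

definition mclp_dual_obj :: "real^'k \<Rightarrow> real^'k \<Rightarrow> real \<Rightarrow> (real \<Rightarrow> real^'k) \<Rightarrow> real" where
  "mclp_dual_obj \<beta> b T P = (\<Sum>k\<in>UNIV. ls_integral T (\<lambda>t. P t $ k) (\<lambda>t. \<beta> $ k + (T - t) * b $ k))"

definition mclp_dual_optimal ::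
  "real^'j^'k \<Rightarrow> real^'k \<Rightarrow> real^'k \<Rightarrow> real^'j \<Rightarrow> real^'j \<Rightarrow> real \<Rightarrow> (real \<Rightarrow> real^'k) \<Rightarrow> bool" where
  "mclp_dual_optimal A \<beta> b \<gamma> c T P \<longleftrightarrow>
     mclp_dual_feasible A \<gamma> c T P \<and>
     (\<forall>P'. mclp_dual_feasible A \<gamma> c T P' \<longrightarrow> mclp_dual_obj \<beta> b T P \<le> mclp_dual_obj \<beta> b T P')"

definition brk :: "(nat \<Rightarrow> real) \<Rightarrow> nat \<Rightarrow> real" where
  "brk \<tau> n = (\<Sum>m\<in>{1..n}. \<tau> m)"

definition state_x :: "real^'k \<Rightarrow> (nat \<Rightarrow> real^'k) \<Rightarrow> (nat \<Rightarrow> real) \<Rightarrow> nat \<Rightarrow> real^'k" where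
  "state_x x0 xd \<tau> n = x0 + (\<Sum>m\<in>{1..n}. \<tau> m *\<^sub>R xd m)"

definition state_q :: "nat \<Rightarrow> real^'j \<Rightarrow> (nat \<Rightarrow> real^'j) \<Rightarrow> (nat \<Rightarrow> real) \<Rightarrow> nat \<Rightarrow> real^'j" where
  "state_q N qN qd \<tau> n = qN + (\<Sum>m\<in>{n+1..N}. \<tau> m *\<^sub>R qd m)"

definition rate_u :: "nat \<Rightarrow> (nat \<Rightarrow> real) \<Rightarrow> (nat \<Rightarrow> real^'j) \<Rightarrow> real \<Rightarrow> real^'j" where
  "rate_u N \<tau> ur t = (\<Sum>n\<in>{1..N}. indicator {brk \<tau> (n-1)<..<brk \<tau> n} t *\<^sub>R ur n)"

definition constr_U ::
  "real \<Rightarrow> nat \<Rightarrow> (nat \<Rightarrow> real) \<Rightarrow> (nat \<Rightarrow> real^'j) \<Rightarrow> real^'j \<Rightarrow> real^'j \<Rightarrow> real \<Rightarrow> real^'j" where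
  "constr_U T N \<tau> ur uB0 uBN t =
     (if t < T then uB0 + integral {0..t} (rate_u N \<tau> ur)
      else uB0 + integral {0..T} (rate_u N \<tau> ur) + uBN)"

definition rate_p :: "real \<Rightarrow> nat \<Rightarrow> (nat \<Rightarrow> real) \<Rightarrow> (nat \<Rightarrow> real^'k) \<Rightarrow> real \<Rightarrow> real^'k" where
  "rate_p T N \<tau> pr s = (\<Sum>n\<in>{1..N}. indicator {T - brk \<tau> n<..<T - brk \<tau> (n-1)} s *\<^sub>R pr n)"

definition constr_P ::
  "real \<Rightarrow> nat \<Rightarrow> (nat \<Rightarrow> real) \<Rightarrow> (nat \<Rightarrow> real^'k) \<Rightarrow> real^'k \<Rightarrow> real^'k \<Rightarrow> real \<Rightarrow> real^'k" where
  "constr_P T N \<tau> pr pB0 pBN s =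
     (if s < T then pBN + integral {0..s} (rate_p T N \<tau> pr)
      else pBN + integral {0..T} (rate_p T N \<tau> pr) + pB0)"

end

theory Submission
  imports Defs "HOL-Probability.Distribution_Functions"
begin

definition okf :: "real \<Rightarrow> (real \<Rightarrow> real) \<Rightarrow> bool" where
  "okf T f \<longleftrightarrow> 0 \<le> T \<and> 0 \<le> f 0 \<and> (\<forall>s t. 0 \<le> s \<longrightarrow> s \<le> t \<longrightarrow> t \<le> T \<longrightarrow> f s \<le> f t)
     \<and> (\<forall>t\<in>{0..<T}. continuous (at_right t) f)"

lemma okf_mono: assumes "okf T f" "x \<le> y" shows "ls_ext T f x \<le> ls_ext T f y"
  using assms unfolding okf_def ls_ext_def by (auto; smt (verit))

lemma okf_nonneg: assumes "okf T f" shows "0 \<le> ls_ext T f x"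
  using okf_mono[OF assms, of "min x (-1)" x] assms by (auto simp: ls_ext_def)

lemma okf_rc: assumes "okf T f" shows "continuous (at_right a) (ls_ext T f)"
proof -
  have T: "0 \<le> T" using assms by (simp add: okf_def)
  show ?thesis unfolding continuous_within
  proof (cases "a < 0")
    case True
    have "\<forall>\<^sub>F x in at_right a. 0 = ls_ext T f x"
      using eventually_at_right_real[OF True] by eventually_elim (auto simp: ls_ext_def)
    then show "(ls_ext T f \<longlongrightarrow> ls_ext T f a) (at_right a)"
      using True by (simp add: ls_ext_def tendsto_eventually Lim_transform_eventually)
  next
    case False
    show "(ls_ext T f \<longlongrightarrow> ls_ext T f a) (at_right a)"
    proof (cases "a < T")
      case True
      with False have "continuous (at_right a) f" using assms by (auto simp: okf_def)
      then have "(f \<longlongrightarrow> f a) (at_right a)" by (simp add: continuous_within)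
      moreover have "\<forall>\<^sub>F x in at_right a. f x = ls_ext T f x"
        using eventually_at_right_real[OF True] by eventually_elim (use False in \<open>auto simp: ls_ext_def\<close>)
      ultimately show ?thesis using False True by (auto simp: ls_ext_def intro: Lim_transform_eventually)
    next
      case False2: False
      have "\<forall>\<^sub>F x in at_right a. f T = ls_ext T f x"
        using eventually_at_right_less[of a] by eventually_elim (use False False2 in \<open>auto simp: ls_ext_def\<close>)
      then show ?thesis using False False2
        by (auto simp: ls_ext_def intro: Lim_transform_eventually)
    qed
  qed
qed

lemma okf_bot: assumes "okf T f" shows "(ls_ext T f \<longlongrightarrow> 0) at_bot"
proof -
  have "\<forall>\<^sub>F x in at_bot. 0 = ls_ext T f x"
    unfolding eventually_at_bot_linorder by (rule exI[of _ "-1"]) (auto simp: ls_ext_def)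
  then show ?thesis by (rule Lim_transform_eventually[OF tendsto_const])
qed

lemma okf_top: assumes "okf T f" shows "(ls_ext T f \<longlongrightarrow> f T) at_top"
proof -
  have "\<forall>\<^sub>F x in at_top. f T = ls_ext T f x"
    using assms unfolding eventually_at_top_linorder okf_def
    by (intro exI[of _ "T"]) (auto simp: ls_ext_def)
  then show ?thesis by (rule Lim_transform_eventually[OF tendsto_const])
qed

lemma okf_fT: assumes "okf T f" shows "0 \<le> f T"
  using assms unfolding okf_def by force

lemma okf_finite: assumes "okf T f" shows "finite_measure (interval_measure (ls_ext T f))"
proof -
  have "finite_borel_measure (interval_measure (ls_ext T f))"
    by (rule finite_borel_measure_interval_measure[OF okf_mono[OF assms] okf_rc[OF assms]
          okf_bot[OF assms] okf_top[OF assms] okf_fT[OF assms]])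
  then show ?thesis by (simp add: finite_borel_measure_def)
qed

lemma okf_sigma: assumes "okf T f" shows "sigma_finite_measure (interval_measure (ls_ext T f))"
  by (rule sigma_finite_interval_measure[OF okf_mono[OF assms] okf_rc[OF assms]])

lemma okf_Iic: assumes "okf T f" shows "emeasure (interval_measure (ls_ext T f)) {..x} = ls_ext T f x"
  by (rule emeasure_interval_measure_Iic[OF okf_mono[OF assms] okf_rc[OF assms] okf_bot[OF assms]])

lemma okf_Ioc: assumes "okf T f" "a \<le> b"
  shows "emeasure (interval_measure (ls_ext T f)) {a<..b} = ls_ext T f b - ls_ext T f a"
  by (rule emeasure_interval_measure_Ioc[OF assms(2) okf_mono[OF assms(1)] okf_rc[OF assms(1)]])

lemma okf_neg0: assumes "okf T f" shows "emeasure (interval_measure (ls_ext T f)) {..<0} = 0"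
proof -
  have eq: "{..<0::real} = (\<Union>n. {..-1/Suc n})"
  proof (auto)
    fix x :: real assume "x < 0"
    then obtain n where "inverse (real (Suc n)) < -x" using reals_Archimedean[of "-x"] by auto
    then show "\<exists>n. x \<le> - (1 / (1 + real n))" by (intro exI[of _ n]) (auto simp: inverse_eq_divide)
  next
    fix x :: real and n :: nat assume "x \<le> - (1 / (1 + real n))"
    moreover have "0 < 1 / (1 + real n)" by simp
    ultimately show "x < 0" by linarith
  qed
  have "emeasure (interval_measure (ls_ext T f)) (\<Union>n. {..-1/Suc n}) = 0"
    by (rule emeasure_UN_eq_0) (auto simp: okf_Iic[OF assms] ls_ext_def)
  then show ?thesis using eq by simp
qed

lemma okf_Icc0: assumes "okf T f" "0 \<le> x"
  shows "emeasure (interval_measure (ls_ext T f)) {0..x} = ls_ext T f x"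
proof -
  have "emeasure (interval_measure (ls_ext T f)) {..x} =
        emeasure (interval_measure (ls_ext T f)) {..<0} + emeasure (interval_measure (ls_ext T f)) {0..x}"
    using assms(2) by (subst plus_emeasure) (auto intro!: arg_cong[where f="emeasure _"])
  then show ?thesis using okf_neg0[OF assms(1)] okf_Iic[OF assms(1)] by simp
qed

lemma okf_inner: assumes "okf T g"
  shows "(\<integral>\<^sup>+ s. indicator {s. 0 \<le> t \<and> 0 \<le> s \<and> t + s \<le> T} s \<partial>interval_measure (ls_ext T g))
         = ennreal (indicator {0..T} t * g (T - t))"
proof -
  have m: "{s. 0 \<le> t \<and> 0 \<le> s \<and> t + s \<le> T} \<in> sets (interval_measure (ls_ext T g))"
    by simp
  show ?thesis
  proof (cases "t \<in> {0..T}")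
    case True
    then have "{s. 0 \<le> t \<and> 0 \<le> s \<and> t + s \<le> T} = {0..T-t}" by auto
    then show ?thesis using True okf_Icc0[OF assms, of "T - t"] m
      by (simp add: ls_ext_def)
  next
    case False
    then have "{s. 0 \<le> t \<and> 0 \<le> s \<and> t + s \<le> T} = {}" by auto
    then show ?thesis using False by simp
  qed
qed

lemma okf_nonneg_in: assumes "okf T g" "0 \<le> x" "x \<le> T" shows "0 \<le> g x"
proof -
  have "g 0 \<le> g x" "0 \<le> g 0" using assms unfolding okf_def by auto
  then show ?thesis by linarith
qed

lemma okf_meas: assumes "okf T g"
  shows "(\<lambda>t. indicator {0..T} t * g (T - t)) \<in> borel_measurable (interval_measure F)"
proof -
  have eq: "(\<lambda>t. indicator {0..T} t * g (T - t)) = (\<lambda>t. indicator {0..T} t * ls_ext T g (T - t))"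
    by (auto simp: indicator_def ls_ext_def fun_eq_iff)
  have m: "ls_ext T g \<in> borel_measurable borel"
    by (rule borel_measurable_mono) (auto simp: mono_def okf_mono[OF assms])
  have "(\<lambda>t. ls_ext T g (T - t)) \<in> borel_measurable borel"
    by (rule measurable_compose[OF _ m]) simp
  then have "(\<lambda>t. ls_ext T g (T - t)) \<in> borel_measurable (interval_measure F)"
    using measurable_cong_sets[OF sets_interval_measure refl] by blast
  then show ?thesis unfolding eq by (intro borel_measurable_times borel_measurable_indicator) auto
qed

lemma okf_integrable: assumes "okf T f" "okf T g"
  shows "integrable (interval_measure (ls_ext T f)) (\<lambda>t. indicator {0..T} t * g (T - t))"
proof (rule finite_measure.integrable_const_bound[OF okf_finite[OF assms(1)], where B="g T"])
  show "(\<lambda>t. indicator {0..T} t * g (T - t)) \<in> borel_measurable (interval_measure (ls_ext T f))"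
    by (rule okf_meas[OF assms(2)])
  show "AE x in interval_measure (ls_ext T f). norm (indicator {0..T} x * g (T - x)) \<le> g T"
  proof (rule AE_I2)
    fix x
    have "0 \<le> ls_ext T g (T - x)" using okf_nonneg[OF assms(2)] .
    moreover have "ls_ext T g (T - x) \<le> ls_ext T g T"
    proof (cases "x \<ge> 0")
      case True then show ?thesis using okf_mono[OF assms(2), of "T - x" T] by simp
    next
      case False then show ?thesis using assms(2) by (simp add: ls_ext_def okf_def)
    qed
    ultimately show "norm (indicator {0..T} x * g (T - x)) \<le> g T"
      using okf_fT[OF assms(2)] by (auto simp: indicator_def ls_ext_def)
  qed
qed

lemma okf_integrable_lin: assumes "okf T f"
  shows "integrable (interval_measure (ls_ext T f)) (\<lambda>t. indicator {0..T} t * (a + (T - t) * b))"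
proof (rule finite_measure.integrable_const_bound[OF okf_finite[OF assms(1)], where B="\<bar>a\<bar> + T * \<bar>b\<bar>"])
  have "(\<lambda>t. indicator {0..T} t * (a + (T - t) * b)) \<in> borel_measurable borel"
    by (intro borel_measurable_times borel_measurable_indicator borel_measurable_continuous_onI continuous_intros) auto
  then show "(\<lambda>t. indicator {0..T} t * (a + (T - t) * b)) \<in> borel_measurable (interval_measure (ls_ext T f))"
    using measurable_cong_sets[OF sets_interval_measure refl] by blast
  show "AE x in interval_measure (ls_ext T f). norm (indicator {0..T} x * (a + (T - x) * b)) \<le> \<bar>a\<bar> + T * \<bar>b\<bar>"
  proof (rule AE_I2)
    fix x
    show "norm (indicator {0..T} x * (a + (T - x) * b)) \<le> \<bar>a\<bar> + T * \<bar>b\<bar>"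
    proof (cases "x \<in> {0..T}")
      case True
      then have "\<bar>(T - x) * b\<bar> \<le> T * \<bar>b\<bar>" by (auto simp: abs_mult intro!: mult_right_mono)
      then show ?thesis using True by auto
    next
      case False then show ?thesis using assms by (auto simp: okf_def)
    qed
  qed
qed

lemma okf_swap: assumes f: "okf T f" and g: "okf T g"
  shows "integral\<^sup>L (interval_measure (ls_ext T f)) (\<lambda>t. indicator {0..T} t * g (T - t)) =
         integral\<^sup>L (interval_measure (ls_ext T g)) (\<lambda>s. indicator {0..T} s * f (T - s))"
proof -
  let ?M = "interval_measure (ls_ext T f)" and ?N = "interval_measure (ls_ext T g)"
  interpret M: sigma_finite_measure ?M by (rule okf_sigma[OF f])
  interpret N: sigma_finite_measure ?N by (rule okf_sigma[OF g])
  interpret pair_sigma_finite ?M ?N ..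
  have nn1: "AE t in ?M. 0 \<le> indicator {0..T} t * g (T - t)"
    using okf_nonneg_in[OF g] by (intro AE_I2) (auto simp: indicator_def)
  have nn2: "AE t in ?N. 0 \<le> indicator {0..T} t * f (T - t)"
    using okf_nonneg_in[OF f] by (intro AE_I2) (auto simp: indicator_def)
  have meas: "(\<lambda>(t, s). indicator {s. 0 \<le> t \<and> 0 \<le> s \<and> t + s \<le> T} s :: ennreal) \<in> borel_measurable (?M \<Otimes>\<^sub>M ?N)"
  proof -
    have "(\<lambda>(t, s). indicator {s. 0 \<le> t \<and> 0 \<le> s \<and> t + s \<le> T} s :: ennreal) =
          (\<lambda>p. if 0 \<le> fst p \<and> 0 \<le> snd p \<and> fst p + snd p \<le> T then 1 else 0)"
      by (auto simp: indicator_def fun_eq_iff)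
    also have "\<dots> = indicator {p. 0 \<le> fst p \<and> 0 \<le> snd p \<and> fst p + snd p \<le> T}"
      by (auto simp: indicator_def fun_eq_iff)
    also have "\<dots> \<in> borel_measurable (?M \<Otimes>\<^sub>M ?N)"
    proof (rule borel_measurable_indicator)
      have c: "closed {p::real\<times>real. 0 \<le> fst p \<and> 0 \<le> snd p \<and> fst p + snd p \<le> T}"
        by (intro closed_Collect_conj closed_Collect_le continuous_intros)
      have "sets (?M \<Otimes>\<^sub>M ?N) = sets (borel \<Otimes>\<^sub>M borel)"
        by (rule sets_pair_measure_cong) simp_all
      also have "\<dots> = sets borel" by (simp only: borel_prod)
      finally show "{p::real\<times>real. 0 \<le> fst p \<and> 0 \<le> snd p \<and> fst p + snd p \<le> T} \<in> sets (?M \<Otimes>\<^sub>M ?N)"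
        using c by simp
    qed
    finally show ?thesis .
  qed
  have "integral\<^sup>L ?M (\<lambda>t. indicator {0..T} t * g (T - t)) =
        enn2real (\<integral>\<^sup>+ t. ennreal (indicator {0..T} t * g (T - t)) \<partial>?M)"
    by (rule integral_eq_nn_integral[OF okf_meas[OF g] nn1])
  also have "(\<integral>\<^sup>+ t. ennreal (indicator {0..T} t * g (T - t)) \<partial>?M) =
      (\<integral>\<^sup>+ t. (\<integral>\<^sup>+ s. indicator {s. 0 \<le> t \<and> 0 \<le> s \<and> t + s \<le> T} s \<partial>?N) \<partial>?M)"
    by (simp add: okf_inner[OF g])
  also have "\<dots> = (\<integral>\<^sup>+ s. (\<integral>\<^sup>+ t. indicator {s. 0 \<le> t \<and> 0 \<le> s \<and> t + s \<le> T} s \<partial>?M) \<partial>?N)"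
    using Fubini'[OF meas] by simp
  also have "\<dots> = (\<integral>\<^sup>+ s. (\<integral>\<^sup>+ t. indicator {t. 0 \<le> s \<and> 0 \<le> t \<and> s + t \<le> T} t \<partial>?M) \<partial>?N)"
    by (intro nn_integral_cong) (auto simp: indicator_def)
  also have "\<dots> = (\<integral>\<^sup>+ s. ennreal (indicator {0..T} s * f (T - s)) \<partial>?N)"
    by (simp add: okf_inner[OF f])
  also have "enn2real \<dots> = integral\<^sup>L ?N (\<lambda>s. indicator {0..T} s * f (T - s))"
    by (rule integral_eq_nn_integral[OF okf_meas[OF f] nn2, symmetric])
  finally show ?thesis .
qed

lemma mv_comp: "((M::real^'a^'b) *v x) $ i = (\<Sum>j\<in>UNIV. M $ i $ j * x $ j)"
  by (simp add: matrix_vector_mult_def)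

lemma tmv_comp: "(transpose (M::real^'a^'b) *v x) $ j = (\<Sum>i\<in>UNIV. M $ i $ j * x $ i)"
  by (simp add: matrix_vector_mult_def transpose_def)

lemma tmv_sum: "(c::real) * (transpose (M::real^'a^'b) *v x) $ j = (\<Sum>i\<in>UNIV. M $ i $ j * (c * x $ i))"
  unfolding tmv_comp by (simp add: sum_distrib_left algebra_simps)

lemma neg_mv: "(- (M::real^'a^'b)) *v x = - (M *v x)"
  by (simp add: vec_eq_iff mv_comp sum_negf)

lemma transpose_neg: "transpose (- (M::real^'a^'b)) = - transpose M"
  by (simp add: vec_eq_iff transpose_def)

lemma transpose_transpose': "transpose (transpose (M::real^'a^'b)) = M"
  by (simp add: vec_eq_iff transpose_def)

lemma dual_feas_iff: "mclp_dual_feasible A \<gamma> c T P \<longleftrightarrow> mclp_feasible (- transpose A) (- \<gamma>) (- c) T P"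
proof -
  have "\<gamma> + t *\<^sub>R c \<le> transpose A *v P t \<longleftrightarrow> (- transpose A) *v P t \<le> - \<gamma> + t *\<^sub>R - c" for t
    by (simp add: neg_mv less_eq_vec_def) (smt (verit))
  then show ?thesis unfolding mclp_dual_feasible_def mclp_feasible_def by simp
qed

lemma feas_iff_dual: "mclp_feasible A \<beta> b T U \<longleftrightarrow> mclp_dual_feasible (- transpose A) (- \<beta>) (- b) T U"
  unfolding dual_feas_iff transpose_neg transpose_transpose' by simp

lemma feas_okf: assumes "mclp_feasible A \<beta> b T U" "0 \<le> T" shows "okf T (\<lambda>t. U t $ j)"
  using assms unfolding mclp_feasible_def okf_def
  by (auto simp: less_eq_vec_def intro: continuous_component)

lemma dfeas_okf: assumes "mclp_dual_feasible A \<gamma> c T P" "0 \<le> T" shows "okf T (\<lambda>t. P t $ k)"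
  using assms unfolding dual_feas_iff by (rule feas_okf)

definition Wf :: "real^'j^'k \<Rightarrow> real \<Rightarrow> (real \<Rightarrow> real^'j) \<Rightarrow> (real \<Rightarrow> real^'k) \<Rightarrow> real" where
  "Wf A T U P = (\<Sum>j\<in>UNIV. \<Sum>k\<in>UNIV. A $ k $ j *
      integral\<^sup>L (interval_measure (ls_ext T (\<lambda>t. U t $ j))) (\<lambda>t. indicator {0..T} t * P (T - t) $ k))"

lemma obj_term_R:
  assumes U: "mclp_feasible A \<beta> b T U" and P: "mclp_dual_feasible A \<gamma> c T P" and T: "0 \<le> T"
  shows "(\<Sum>k\<in>UNIV. A $ k $ j * integral\<^sup>L (interval_measure (ls_ext T (\<lambda>t. U t $ j))) (\<lambda>t. indicator {0..T} t * P (T - t) $ k))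
     = integral\<^sup>L (interval_measure (ls_ext T (\<lambda>t. U t $ j))) (\<lambda>t. indicator {0..T} t * (transpose A *v P (T - t)) $ j)"
    (is "?R = _")
  and "integrable (interval_measure (ls_ext T (\<lambda>t. U t $ j))) (\<lambda>t. indicator {0..T} t * (transpose A *v P (T - t)) $ j)"
proof -
  let ?M = "interval_measure (ls_ext T (\<lambda>t. U t $ j))"
  have oU: "okf T (\<lambda>t. U t $ j)" by (rule feas_okf[OF U T])
  have oP: "okf T (\<lambda>t. P t $ k)" for k by (rule dfeas_okf[OF P T])
  have intk: "integrable ?M (\<lambda>t. indicator {0..T} t * P (T - t) $ k)" for k
    using okf_integrable[OF oU oP[of k]] by simp
  have "?R = (\<Sum>k\<in>UNIV. integral\<^sup>L ?M (\<lambda>t. A $ k $ j * (indicator {0..T} t * P (T - t) $ k)))"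
    by simp
  also have "\<dots> = integral\<^sup>L ?M (\<lambda>t. \<Sum>k\<in>UNIV. A $ k $ j * (indicator {0..T} t * P (T - t) $ k))"
    by (rule Bochner_Integration.integral_sum[symmetric]) (use intk in auto)
  also have "\<dots> = integral\<^sup>L ?M (\<lambda>t. indicator {0..T} t * (transpose A *v P (T - t)) $ j)"
    by (simp only: tmv_sum)
  finally show "?R = integral\<^sup>L ?M (\<lambda>t. indicator {0..T} t * (transpose A *v P (T - t)) $ j)" .
  have "integrable ?M (\<lambda>t. \<Sum>k\<in>UNIV. A $ k $ j * (indicator {0..T} t * P (T - t) $ k))"
    using intk by auto
  then show "integrable ?M (\<lambda>t. indicator {0..T} t * (transpose A *v P (T - t)) $ j)"
    by (simp only: tmv_sum)
qed

lemma obj_term_le: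
  assumes U: "mclp_feasible A \<beta> b T U" and P: "mclp_dual_feasible A \<gamma> c T P" and T: "0 \<le> T"
  shows "ls_integral T (\<lambda>t. U t $ j) (\<lambda>t. \<gamma> $ j + (T - t) * c $ j) \<le>
     (\<Sum>k\<in>UNIV. A $ k $ j * integral\<^sup>L (interval_measure (ls_ext T (\<lambda>t. U t $ j))) (\<lambda>t. indicator {0..T} t * P (T - t) $ k))"
  unfolding obj_term_R(1)[OF U P T] ls_integral_def
proof (rule integral_mono[OF okf_integrable_lin[OF feas_okf[OF U T]] obj_term_R(2)[OF U P T]])
  fix t
  show "indicator {0..T} t * (\<gamma> $ j + (T - t) * c $ j) \<le> indicator {0..T} t * (transpose A *v P (T - t)) $ j"
  proof (cases "t \<in> {0..T}")
    case True
    then have "\<gamma> + (T - t) *\<^sub>R c \<le> transpose A *v P (T - t)"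
      using P unfolding mclp_dual_feasible_def by auto
    then show ?thesis using True by (auto simp: less_eq_vec_def)
  qed simp
qed

lemma obj_term_eq:
  assumes U: "mclp_feasible A \<beta> b T U" and P: "mclp_dual_feasible A \<gamma> c T P" and T: "0 \<le> T"
    and AE: "AE t in interval_measure (ls_ext T (\<lambda>t. U t $ j)).
          t \<in> {0..T} \<longrightarrow> (transpose A *v P (T - t)) $ j = \<gamma> $ j + (T - t) * c $ j"
  shows "ls_integral T (\<lambda>t. U t $ j) (\<lambda>t. \<gamma> $ j + (T - t) * c $ j) =
     (\<Sum>k\<in>UNIV. A $ k $ j * integral\<^sup>L (interval_measure (ls_ext T (\<lambda>t. U t $ j))) (\<lambda>t. indicator {0..T} t * P (T - t) $ k))"
  unfolding obj_term_R(1)[OF U P T] ls_integral_def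
proof (rule integral_cong_AE[OF borel_measurable_integrable[OF okf_integrable_lin[OF feas_okf[OF U T]]]
       borel_measurable_integrable[OF obj_term_R(2)[OF U P T]]])
  show "AE t in interval_measure (ls_ext T (\<lambda>t. U t $ j)).
      indicator {0..T} t * (\<gamma> $ j + (T - t) * c $ j) = indicator {0..T} t * (transpose A *v P (T - t)) $ j"
    using AE by eventually_elim (auto simp: indicator_def)
qed

lemma WD_le:
  assumes U: "mclp_feasible A \<beta> b T U" and P: "mclp_dual_feasible A \<gamma> c T P" and T: "0 \<le> T"
  shows "mclp_obj \<gamma> c T U \<le> Wf A T U P"
  unfolding mclp_obj_def Wf_def by (rule sum_mono) (rule obj_term_le[OF U P T])

lemma WD_eq:
  assumes U: "mclp_feasible A \<beta> b T U" and P: "mclp_dual_feasible A \<gamma> c T P" and T: "0 \<le> T"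
    and AE: "\<And>j. AE t in interval_measure (ls_ext T (\<lambda>t. U t $ j)).
          t \<in> {0..T} \<longrightarrow> (transpose A *v P (T - t)) $ j = \<gamma> $ j + (T - t) * c $ j"
  shows "mclp_obj \<gamma> c T U = Wf A T U P"
  unfolding mclp_obj_def Wf_def by (rule sum.cong[OF refl]) (rule obj_term_eq[OF U P T AE])

lemma obj_neg: "mclp_obj (- \<beta>) (- b) T P = - mclp_dual_obj \<beta> b T P"
proof -
  have "ls_integral T f (\<lambda>t. (- \<beta>) $ k + (T - t) * (- b) $ k) = - ls_integral T f (\<lambda>t. \<beta> $ k + (T - t) * b $ k)"
    for f and k
  proof -
    have "(\<lambda>t. indicator {0..T} t * ((- \<beta>) $ k + (T - t) * (- b) $ k)) =
          (\<lambda>t. - (indicator {0..T} t * (\<beta> $ k + (T - t) * b $ k)))"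
      by (auto simp: fun_eq_iff algebra_simps)
    then show ?thesis unfolding ls_integral_def by (simp only: Bochner_Integration.integral_minus)
  qed
  then show ?thesis unfolding mclp_obj_def mclp_dual_obj_def by (simp add: sum_negf)
qed

lemma Wf_neg:
  assumes U: "mclp_feasible A \<beta> b T U" and P: "mclp_dual_feasible A \<gamma> c T P" and T: "0 \<le> T"
  shows "Wf (- transpose A) T P U = - Wf A T U P"
proof -
  have sw: "integral\<^sup>L (interval_measure (ls_ext T (\<lambda>t. P t $ k))) (\<lambda>t. indicator {0..T} t * U (T - t) $ j)
      = integral\<^sup>L (interval_measure (ls_ext T (\<lambda>t. U t $ j))) (\<lambda>t. indicator {0..T} t * P (T - t) $ k)" for j k
    using okf_swap[OF dfeas_okf[OF P T, of k] feas_okf[OF U T, of j]] by simp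
  show ?thesis unfolding Wf_def
    by (simp add: sw transpose_def sum_negf) (rule sum.swap)
qed

theorem weak_duality:
  assumes U: "mclp_feasible A \<beta> b T U" and P: "mclp_dual_feasible A \<gamma> c T P" and T: "0 \<le> T"
  shows "mclp_obj \<gamma> c T U \<le> mclp_dual_obj \<beta> b T P"
proof -
  have P': "mclp_feasible (- transpose A) (- \<gamma>) (- c) T P" using P by (simp add: dual_feas_iff)
  have U': "mclp_dual_feasible (- transpose A) (- \<beta>) (- b) T U" using U by (simp add: feas_iff_dual)
  have "mclp_obj (- \<beta>) (- b) T P \<le> Wf (- transpose A) T P U" by (rule WD_le[OF P' U' T])
  then have "- mclp_dual_obj \<beta> b T P \<le> - Wf A T U P" by (simp add: obj_neg Wf_neg[OF U P T])
  then show ?thesis using WD_le[OF U P T] by linarith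
qed

lemma Ioc_lmeas: "{a<..(b::real)} \<in> lmeasurable" by (cases "a \<le> b") (auto simp: fmeasurable_def)

lemma hi_ind:
  fixes a b t :: real
  assumes "0 \<le> a" "a \<le> b" "0 \<le> t"
  shows "(indicator {a<..<b} has_integral max 0 (min b t - a)) {0..t}"
proof -
  let ?J = "{a<..<b} \<inter> {0..t}"
  have J: "?J \<in> lmeasurable \<and> max 0 (min b t - a) = measure lebesgue ?J"
  proof (cases "t \<le> a")
    case True
    then have "?J = {}" by auto
    then show ?thesis using True by auto
  next
    case False
    show ?thesis
    proof (cases "t < b")
      case True
      then have "?J = {a<..t}" using False assms by auto
      then show ?thesis using True False Ioc_lmeas by simp
    next
      case False2: False
      then have "?J = {a<..<b}" using False assms by auto
      then show ?thesis using False2 False assms by simp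
    qed
  qed
  then have "(indicator ?J has_integral max 0 (min b t - a)) UNIV"
    using lmeasurable_iff_indicator_has_integral by blast
  moreover have "indicator ?J = (\<lambda>x. if x \<in> {0..t} then indicator {a<..<b} x else (0::real))"
    by (auto simp: indicator_def fun_eq_iff)
  ultimately show ?thesis using has_integral_restrict_UNIV[of "{0..t}" "indicator {a<..<b}" "max 0 (min b t - a)"] by simp
qed

lemma brk_0[simp]: "brk \<tau> 0 = 0" by (simp add: brk_def)

lemma brk_Suc: "brk \<tau> (Suc n) = brk \<tau> n + \<tau> (Suc n)"
  by (simp add: brk_def)

lemma brk_prev: "1 \<le> n \<Longrightarrow> brk \<tau> n = brk \<tau> (n - 1) + \<tau> n"
  by (cases n) (auto simp: brk_Suc)

lemma brk_mono: assumes "\<forall>n\<in>{1..N}. 0 \<le> \<tau> n" "i \<le> j" "j \<le> N" shows "brk \<tau> i \<le> brk \<tau> j"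
  unfolding brk_def using assms by (intro sum_mono2) auto

lemma brk_nonneg: assumes "\<forall>n\<in>{1..N}. 0 \<le> \<tau> n" "i \<le> N" shows "0 \<le> brk \<tau> i"
  using brk_mono[OF assms(1) _ assms(2), of 0] by simp

definition lam :: "(nat \<Rightarrow> real) \<Rightarrow> nat \<Rightarrow> real \<Rightarrow> real" where
  "lam \<tau> n t = max 0 (min (brk \<tau> n) t - brk \<tau> (n - 1))"

definition Iu :: "nat \<Rightarrow> (nat \<Rightarrow> real) \<Rightarrow> (nat \<Rightarrow> real^'a) \<Rightarrow> real \<Rightarrow> real^'a" where
  "Iu N \<tau> r t = (\<Sum>n\<in>{1..N}. lam \<tau> n t *\<^sub>R r n)"

lemma lam_nonneg: "0 \<le> lam \<tau> n t" by (simp add: lam_def)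

lemma lam_mono: "s \<le> t \<Longrightarrow> lam \<tau> n s \<le> lam \<tau> n t" by (simp add: lam_def)

lemma Iu_cont: "continuous_on UNIV (Iu N \<tau> r)"
  unfolding Iu_def lam_def by (intro continuous_intros)

lemma rate_int:
  assumes tau: "\<forall>n\<in>{1..N}. 0 \<le> \<tau> n" and t: "0 \<le> t"
  shows "(rate_u N \<tau> r has_integral Iu N \<tau> r t) {0..t}"
  unfolding rate_u_def Iu_def
proof (rule has_integral_sum)
  fix n assume n: "n \<in> {1..N}"
  have "(indicator {brk \<tau> (n - 1)<..<brk \<tau> n} has_integral lam \<tau> n t) {0..t}"
    unfolding lam_def
    by (rule hi_ind) (use n tau t brk_nonneg[OF tau, of "n-1"] brk_mono[OF tau, of "n-1" n] in auto)
  then show "((\<lambda>x. indicator {brk \<tau> (n - 1)<..<brk \<tau> n} x *\<^sub>R r n) has_integral lam \<tau> n t *\<^sub>R r n) {0..t}"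
    by (rule has_integral_scaleR_left)
qed simp

lemma rate_integral:
  assumes tau: "\<forall>n\<in>{1..N}. 0 \<le> \<tau> n" and t: "0 \<le> t"
  shows "integral {0..t} (rate_u N \<tau> r) = Iu N \<tau> r t"
  using rate_int[OF assms] by (rule integral_unique)

lemma Iu_piece:
  assumes tau: "\<forall>n\<in>{1..N}. 0 \<le> \<tau> n" and m: "m \<in> {1..N}"
    and t: "brk \<tau> (m - 1) \<le> t" "t \<le> brk \<tau> m"
  shows "Iu N \<tau> r t = (\<Sum>n\<in>{1..<m}. \<tau> n *\<^sub>R r n) + (t - brk \<tau> (m - 1)) *\<^sub>R r m"
proof -
  have split: "{1..N} = {1..<m} \<union> ({m} \<union> {m<..N})" using m by auto
  have s1: "(\<Sum>n\<in>{1..<m}. lam \<tau> n t *\<^sub>R r n) = (\<Sum>n\<in>{1..<m}. \<tau> n *\<^sub>R r n)"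
  proof (rule sum.cong[OF refl])
    fix n assume n: "n \<in> {1..<m}"
    have "brk \<tau> n \<le> brk \<tau> (m - 1)" using n m by (intro brk_mono[OF tau]) auto
    moreover have "brk \<tau> n = brk \<tau> (n - 1) + \<tau> n" using n by (intro brk_prev) auto
    moreover have "0 \<le> \<tau> n" using n m tau by auto
    ultimately have "lam \<tau> n t = \<tau> n" using t unfolding lam_def by auto
    then show "lam \<tau> n t *\<^sub>R r n = \<tau> n *\<^sub>R r n" by simp
  qed
  have s3: "(\<Sum>n\<in>{m<..N}. lam \<tau> n t *\<^sub>R r n) = 0"
  proof (rule sum.neutral, rule ballI)
    fix n assume n: "n \<in> {m<..N}"
    have "brk \<tau> m \<le> brk \<tau> (n - 1)" using n m by (intro brk_mono[OF tau]) auto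
    then have "lam \<tau> n t = 0" using t unfolding lam_def by auto
    then show "lam \<tau> n t *\<^sub>R r n = 0" by simp
  qed
  have s2: "lam \<tau> m t = t - brk \<tau> (m - 1)" using t unfolding lam_def by auto
  let ?f = "\<lambda>n. lam \<tau> n t *\<^sub>R r n"
  have e1: "sum ?f {1..N} = sum ?f {1..<m} + sum ?f ({m} \<union> {m<..N})"
    unfolding split by (rule sum.union_disjoint) auto
  have e2: "sum ?f ({m} \<union> {m<..N}) = ?f m + sum ?f {m<..N}"
    by (subst sum.union_disjoint) auto
  show ?thesis unfolding Iu_def e1 e2 s1 s2 s3 by simp
qed

lemma find_m:
  assumes tau: "\<forall>n\<in>{1..N}. 0 \<le> \<tau> n" and N: "1 \<le> N" and t: "0 \<le> t" "t \<le> brk \<tau> N"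
  shows "\<exists>m\<in>{1..N}. brk \<tau> (m - 1) \<le> t \<and> t \<le> brk \<tau> m"
proof -
  define m where "m = (LEAST n. t \<le> brk \<tau> n)"
  have tm: "t \<le> brk \<tau> m" unfolding m_def by (rule LeastI[of _ N]) (rule t(2))
  have mN: "m \<le> N" unfolding m_def by (rule Least_le) (rule t(2))
  show ?thesis
  proof (cases "m = 0")
    case True
    then have "t = 0" using tm t by simp
    moreover have "0 \<le> brk \<tau> 1" using brk_nonneg[OF tau, of 1] N by simp
    ultimately show ?thesis using N by (intro bexI[of _ 1]) auto
  next
    case False
    then have "\<not> t \<le> brk \<tau> (m - 1)" unfolding m_def
      by (intro not_less_Least) (use False in \<open>auto simp: m_def\<close>)
    then show ?thesis using False mN tm by (intro bexI[of _ m]) auto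
  qed
qed

lemma state_x_Suc: "1 \<le> m \<Longrightarrow> state_x x0 xd \<tau> m = state_x x0 xd \<tau> (m - 1) + \<tau> m *\<^sub>R xd m"
  by (cases m) (auto simp: state_x_def)

lemma state_x_lt: "1 \<le> m \<Longrightarrow> state_x x0 xd \<tau> (m - 1) = x0 + (\<Sum>n\<in>{1..<m}. \<tau> n *\<^sub>R xd n)"
  by (cases m) (auto simp: state_x_def atLeastLessThanSuc_atLeastAtMost)

lemma brk_lt: "1 \<le> m \<Longrightarrow> brk \<tau> (m - 1) = (\<Sum>n\<in>{1..<m}. \<tau> n)"
  by (cases m) (auto simp: brk_def atLeastLessThanSuc_atLeastAtMost)

lemma conv_nonneg:
  fixes a d s \<tau> :: real
  assumes "0 \<le> a" "0 \<le> a + \<tau> * d" "0 \<le> s" "s \<le> \<tau>"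
  shows "0 \<le> a + s * d"
proof (cases "0 \<le> d")
  case True then show ?thesis using assms by simp
next
  case False
  then have "\<tau> * d \<le> s * d" using assms by (intro mult_right_mono_neg) auto
  then show ?thesis using assms by linarith
qed

locale cdata =
  fixes M :: "real^'a^'b" and \<beta> b :: "real^'b" and T :: real and N :: nat and \<tau> :: "nat \<Rightarrow> real"
    and ur :: "nat \<Rightarrow> real^'a" and xd :: "nat \<Rightarrow> real^'b" and uB0 uBN :: "real^'a" and x0 xBN :: "real^'b"
  assumes T_pos: "0 < T" and N_pos: "1 \<le> N" and tau: "\<forall>n\<in>{1..N}. 0 \<le> \<tau> n"
    and sumT: "(\<Sum>n\<in>{1..N}. \<tau> n) = T"
    and rates: "\<forall>n\<in>{1..N}. M *v ur n + xd n = b" and ur_nn: "\<forall>n\<in>{1..N}. 0 \<le> ur n"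
    and bd0: "M *v uB0 + x0 = \<beta>" and bdN: "M *v uBN + xBN = state_x x0 xd \<tau> N"
    and nn: "0 \<le> uB0" "0 \<le> uBN" "0 \<le> xBN" and states: "\<forall>n\<in>{0..N}. 0 \<le> state_x x0 xd \<tau> n"
begin

abbreviation "U \<equiv> constr_U T N \<tau> ur uB0 uBN"

lemma brkN: "brk \<tau> N = T" using sumT by (simp add: brk_def)

lemma U_lt: "0 \<le> t \<Longrightarrow> t < T \<Longrightarrow> U t = uB0 + Iu N \<tau> ur t"
  by (simp add: constr_U_def rate_integral[OF tau])

lemma U_T: "U T = uB0 + Iu N \<tau> ur T + uBN"
  using T_pos by (simp add: constr_U_def rate_integral[OF tau])

lemma Iu_T: "Iu N \<tau> r T = (\<Sum>n\<in>{1..N}. \<tau> n *\<^sub>R r n)"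
proof -
  have "Iu N \<tau> r T = (\<Sum>n\<in>{1..<N}. \<tau> n *\<^sub>R r n) + (T - brk \<tau> (N - 1)) *\<^sub>R r N"
    using brkN N_pos brk_mono[OF tau, of "N - 1" N]
    by (intro Iu_piece[OF tau]) auto
  also have "T - brk \<tau> (N - 1) = \<tau> N" using brk_prev[of N \<tau>] N_pos brkN by simp
  also have "(\<Sum>n\<in>{1..<N}. \<tau> n *\<^sub>R r n) + \<tau> N *\<^sub>R r N = (\<Sum>n\<in>{1..N}. \<tau> n *\<^sub>R r n)"
    using N_pos by (cases N) (auto simp: atLeastLessThanSuc_atLeastAtMost)
  finally show ?thesis .
qed

lemma M_sum: "M *v (\<Sum>n\<in>S. \<tau> n *\<^sub>R ur n) = (\<Sum>n\<in>S. \<tau> n) *\<^sub>R b - (\<Sum>n\<in>S. \<tau> n *\<^sub>R xd n)"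
  if "S \<subseteq> {1..N}" for S
proof -
  have "M *v (\<Sum>n\<in>S. \<tau> n *\<^sub>R ur n) = (\<Sum>n\<in>S. \<tau> n *\<^sub>R (M *v ur n))"
    by (simp add: vec.sum matrix_vector_mult_scaleR)
  also have "\<dots> = (\<Sum>n\<in>S. \<tau> n *\<^sub>R b - \<tau> n *\<^sub>R xd n)"
    using rates that by (intro sum.cong refl) (auto simp: eq_diff_eq[symmetric] scaleR_diff_right)
  also have "\<dots> = (\<Sum>n\<in>S. \<tau> n) *\<^sub>R b - (\<Sum>n\<in>S. \<tau> n *\<^sub>R xd n)"
    by (simp add: sum_subtractf scaleR_sum_left)
  finally show ?thesis .
qed

lemma rate_m: "m \<in> {1..N} \<Longrightarrow> M *v ur m = b - xd m"
  using rates by (auto simp: eq_diff_eq)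

lemma U_piece:
  assumes m: "m \<in> {1..N}" and t: "brk \<tau> (m - 1) \<le> t" "t \<le> brk \<tau> m" "t < T"
  shows "U t = uB0 + (\<Sum>n\<in>{1..<m}. \<tau> n *\<^sub>R ur n) + (t - brk \<tau> (m - 1)) *\<^sub>R ur m"
proof -
  have "0 \<le> brk \<tau> (m - 1)" using m by (intro brk_nonneg[OF tau]) auto
  then have "0 \<le> t" using t by linarith
  then show ?thesis using U_lt t Iu_piece[OF tau m t(1,2)] by (simp add: add.assoc)
qed

lemma slack_piece:
  assumes m: "m \<in> {1..N}" and t: "brk \<tau> (m - 1) \<le> t" "t \<le> brk \<tau> m" "t < T"
  shows "\<beta> + t *\<^sub>R b - M *v U t = state_x x0 xd \<tau> (m - 1) + (t - brk \<tau> (m - 1)) *\<^sub>R xd m"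
proof -
  let ?s = "t - brk \<tau> (m - 1)"
  have "M *v U t = M *v uB0 + M *v (\<Sum>n\<in>{1..<m}. \<tau> n *\<^sub>R ur n) + ?s *\<^sub>R (M *v ur m)"
    unfolding U_piece[OF assms] by (simp add: matrix_vector_right_distrib matrix_vector_mult_scaleR)
  also have "\<dots> = (\<beta> - x0) + ((\<Sum>n\<in>{1..<m}. \<tau> n) *\<^sub>R b - (\<Sum>n\<in>{1..<m}. \<tau> n *\<^sub>R xd n)) + ?s *\<^sub>R (b - xd m)"
    using m by (subst M_sum) (auto simp: rate_m bd0[symmetric])
  finally have "M *v U t = (\<beta> - x0) + ((\<Sum>n\<in>{1..<m}. \<tau> n) *\<^sub>R b - (\<Sum>n\<in>{1..<m}. \<tau> n *\<^sub>R xd n)) + ?s *\<^sub>R (b - xd m)" .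
  moreover have "(\<Sum>n\<in>{1..<m}. \<tau> n) = brk \<tau> (m - 1)" using m brk_lt[of m \<tau>] by simp
  moreover have "state_x x0 xd \<tau> (m - 1) = x0 + (\<Sum>n\<in>{1..<m}. \<tau> n *\<^sub>R xd n)" using m by (intro state_x_lt) auto
  ultimately show ?thesis by (simp add: algebra_simps)
qed

lemma slack_T: "\<beta> + T *\<^sub>R b - M *v U T = xBN"
proof -
  have "M *v U T = M *v uB0 + M *v (\<Sum>n\<in>{1..N}. \<tau> n *\<^sub>R ur n) + M *v uBN"
    unfolding U_T Iu_T by (simp add: matrix_vector_right_distrib)
  also have "\<dots> = (\<beta> - x0) + (T *\<^sub>R b - (\<Sum>n\<in>{1..N}. \<tau> n *\<^sub>R xd n)) + (state_x x0 xd \<tau> N - xBN)"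
  proof -
    have a: "M *v uB0 = \<beta> - x0" using bd0 by (simp add: eq_diff_eq)
    have b': "M *v uBN = state_x x0 xd \<tau> N - xBN" using bdN by (simp add: eq_diff_eq)
    have c: "M *v (\<Sum>n\<in>{1..N}. \<tau> n *\<^sub>R ur n) = T *\<^sub>R b - (\<Sum>n\<in>{1..N}. \<tau> n *\<^sub>R xd n)"
      using M_sum[of "{1..N}"] sumT by simp
    show ?thesis by (simp only: a b' c)
  qed
  finally show ?thesis by (simp add: state_x_def algebra_simps)
qed

lemma slack_nonneg:
  assumes t: "0 \<le> t" "t \<le> T" shows "0 \<le> \<beta> + t *\<^sub>R b - M *v U t"
proof (cases "t = T")
  case True then show ?thesis using slack_T nn by simp
next
  case False
  then have tT: "t < T" using t by simp
  obtain m where m: "m \<in> {1..N}" "brk \<tau> (m - 1) \<le> t" "t \<le> brk \<tau> m"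
    using find_m[OF tau N_pos t(1)] t brkN by auto
  have "state_x x0 xd \<tau> m = state_x x0 xd \<tau> (m - 1) + \<tau> m *\<^sub>R xd m"
    using m by (intro state_x_Suc) auto
  moreover have "0 \<le> state_x x0 xd \<tau> m" "0 \<le> state_x x0 xd \<tau> (m - 1)" using states m by auto
  ultimately have s0: "0 \<le> state_x x0 xd \<tau> (m - 1)" "0 \<le> state_x x0 xd \<tau> (m - 1) + \<tau> m *\<^sub>R xd m"
    by auto
  have "\<tau> m = brk \<tau> m - brk \<tau> (m - 1)" using brk_prev[of m \<tau>] m by simp
  then have sr: "0 \<le> t - brk \<tau> (m - 1)" "t - brk \<tau> (m - 1) \<le> \<tau> m" using m by auto
  show ?thesis unfolding slack_piece[OF m tT] less_eq_vec_def
  proof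
    fix i
    have a: "0 \<le> state_x x0 xd \<tau> (m - 1) $ i" "0 \<le> state_x x0 xd \<tau> (m - 1) $ i + \<tau> m * xd m $ i"
      using s0 unfolding less_eq_vec_def by auto
    show "0 $ i \<le> (state_x x0 xd \<tau> (m - 1) + (t - brk \<tau> (m - 1)) *\<^sub>R xd m) $ i"
      using conv_nonneg[OF a sr] by simp
  qed
qed

lemma Iu_nonneg: "(\<forall>n\<in>{1..N}. 0 \<le> r n) \<Longrightarrow> 0 \<le> Iu N \<tau> r t"
  unfolding Iu_def by (intro sum_nonneg) (auto intro: scaleR_nonneg_nonneg lam_nonneg)

lemma Iu_mono: "(\<forall>n\<in>{1..N}. 0 \<le> r n) \<Longrightarrow> s \<le> t \<Longrightarrow> Iu N \<tau> r s \<le> Iu N \<tau> r t"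
  unfolding Iu_def by (intro sum_mono scaleR_right_mono lam_mono) (auto intro: scaleR_right_mono)

lemma U_nonneg: "0 \<le> t \<Longrightarrow> t \<le> T \<Longrightarrow> 0 \<le> U t"
  using U_lt U_T Iu_nonneg[OF ur_nn] nn by (cases "t = T") (auto intro: add_nonneg_nonneg)

lemma U_mono: assumes "0 \<le> s" "s \<le> t" "t \<le> T" shows "U s \<le> U t"
proof (cases "t = T")
  case True
  show ?thesis
  proof (cases "s = T")
    case False
    then have "U s = uB0 + Iu N \<tau> ur s" using assms U_lt by simp
    also have "\<dots> \<le> uB0 + Iu N \<tau> ur T" using Iu_mono[OF ur_nn] assms True by simp
    also have "\<dots> \<le> U T" unfolding U_T using nn by simp
    finally show ?thesis using True by simp
  qed (use True in simp)
next
  case False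
  then show ?thesis using assms U_lt Iu_mono[OF ur_nn, of s t] by simp
qed

lemma U_rc: assumes t: "0 \<le> t" "t < T" shows "continuous (at_right t) U"
proof -
  have "continuous (at t) (\<lambda>x. uB0 + Iu N \<tau> ur x)"
    using Iu_cont[of N \<tau> ur] by (intro continuous_intros) (simp add: continuous_on_eq_continuous_at)
  then have c: "((\<lambda>x. uB0 + Iu N \<tau> ur x) \<longlongrightarrow> U t) (at_right t)"
    using U_lt[OF t] by (simp add: continuous_at filterlim_at_split)
  have "\<forall>\<^sub>F x in at_right t. uB0 + Iu N \<tau> ur x = U x"
    using eventually_at_right_real[OF t(2)] by eventually_elim (use t U_lt in auto)
  then show ?thesis unfolding continuous_within using c by (rule Lim_transform_eventually[rotated])
qed

lemma U_feasible: "mclp_feasible M \<beta> b T U"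
  unfolding mclp_feasible_def
proof (intro conjI ballI allI impI)
  fix t assume "t \<in> {0..T}"
  then show "0 \<le> U t" using U_nonneg by auto
next
  fix s t :: real assume "0 \<le> s" "s \<le> t" "t \<le> T" then show "U s \<le> U t" by (rule U_mono)
next
  fix t assume "t \<in> {0..<T}" then show "continuous (at_right t) U" using U_rc by auto
next
  fix t assume "t \<in> {0..T}"
  then have "0 \<le> \<beta> + t *\<^sub>R b - M *v U t" using slack_nonneg by auto
  then show "M *v U t \<le> \<beta> + t *\<^sub>R b" by (simp add: le_diff_eq)
qed

end

lemma okf_pt0: assumes "okf T f" "f 0 = 0"
  shows "emeasure (interval_measure (ls_ext T f)) {0} = 0"
proof -
  have "emeasure (interval_measure (ls_ext T f)) {0} \<le> emeasure (interval_measure (ls_ext T f)) {-1<..0}"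
    by (intro emeasure_mono) auto
  also have "\<dots> = 0" using okf_Ioc[OF assms(1), of "-1" 0] assms by (simp add: ls_ext_def okf_def)
  finally show ?thesis by simp
qed

lemma okf_pt:
  assumes f: "okf T f" and g: "continuous_on {0..T} g" and c: "0 < c" "c \<le> T"
    and fg: "\<And>x. 0 \<le> x \<Longrightarrow> x \<le> c \<Longrightarrow> f x = g x"
  shows "emeasure (interval_measure (ls_ext T f)) {c} = 0"
proof -
  let ?M = "interval_measure (ls_ext T f)"
  interpret finite_measure ?M by (rule okf_finite[OF f])
  have le_e: "measure ?M {c} \<le> e" if e: "0 < e" for e
  proof -
    obtain d where d: "0 < d" "\<And>x. x \<in> {0..T} \<Longrightarrow> dist x c < d \<Longrightarrow> dist (g x) (g c) < e"
      using g c e unfolding continuous_on_iff by (metis atLeastAtMost_iff less_imp_le)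
    define x where "x = max (c / 2) (c - d / 2)"
    have x: "0 \<le> x" "x < c" "dist x c < d" using c d by (auto simp: x_def dist_real_def)
    have "measure ?M {c} \<le> measure ?M {x<..c}"
      using x by (intro finite_measure_mono) auto
    also have "measure ?M {x<..c} = ls_ext T f c - ls_ext T f x"
      using okf_Ioc[OF f, of x c] x okf_mono[OF f, of x c]
      by (simp add: measure_def)
    also have "\<dots> = g c - g x" using x c fg[of x] fg[of c] by (simp add: ls_ext_def)
    also have "\<dots> < e" using d(2)[of x] x c by (auto simp: dist_real_def)
    finally show ?thesis by simp
  qed
  have "measure ?M {c} \<le> 0"
  proof (rule field_le_epsilon)
    fix e :: real assume "0 < e"
    from le_e[OF this] show "measure ?M {c} \<le> 0 + e" by linarith
  qed
  then have "measure ?M {c} = 0" using measure_nonneg[of ?M "{c}"] by linarith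
  then show ?thesis by (simp add: emeasure_eq_measure)
qed

lemma okf_flat:
  assumes f: "okf T f" and flat: "\<And>x. a \<le> x \<Longrightarrow> x < c \<Longrightarrow> ls_ext T f x = ls_ext T f a"
  shows "emeasure (interval_measure (ls_ext T f)) {a<..<c} = 0"
proof (cases "a < c")
  case False then show ?thesis by simp
next
  case True
  let ?M = "interval_measure (ls_ext T f)"
  let ?P = "\<lambda>n::nat. {a<..c - (c - a) / (real n + 2)}"
  have eq: "{a<..<c} = (\<Union>n. ?P n)"
  proof (intro equalityI subsetI)
    fix x assume x: "x \<in> {a<..<c}"
    obtain n where n: "(c - a) / (c - x) < real n" using reals_Archimedean2 by blast
    have "(c - a) / (real n + 2) \<le> c - x"
    proof -
      have "c - a < real n * (c - x)" using n x by (simp add: divide_less_eq)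
      also have "\<dots> \<le> (real n + 2) * (c - x)" using x by (intro mult_right_mono) auto
      finally show ?thesis by (simp add: divide_le_eq mult.commute)
    qed
    then have "x \<in> ?P n" using x by auto
    then show "x \<in> (\<Union>n. ?P n)" by blast
  next
    fix x assume "x \<in> (\<Union>n. ?P n)"
    then obtain n where "x \<in> ?P n" by auto
    moreover have "0 < (c - a) / (real n + 2)" using True by simp
    ultimately show "x \<in> {a<..<c}" by auto
  qed
  have "emeasure ?M (\<Union>n. ?P n) = 0"
  proof (rule emeasure_UN_eq_0)
    fix n
    have p: "0 < (c - a) / (real n + 2)" "(c - a) / (real n + 2) \<le> c - a"
      using True by (auto simp: divide_le_eq)
    show "emeasure ?M (?P n) = 0"
      using okf_Ioc[OF f, of a "c - (c - a) / (real n + 2)"] p flat[of "c - (c - a) / (real n + 2)"]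
      by simp
  qed auto
  then show ?thesis using eq by simp
qed

context cdata begin

lemma U_okf: "okf T (\<lambda>t. U t $ j)"
  using feas_okf[OF U_feasible, of j] T_pos by simp

lemma gcont: "continuous_on S (\<lambda>x. uB0 $ j + Iu N \<tau> ur x $ j)"
proof -
  have "continuous (at x) (\<lambda>x. uB0 $ j + Iu N \<tau> ur x $ j)" for x
    using Iu_cont[of N \<tau> ur] by (intro continuous_add continuous_const continuous_component)
       (simp add: continuous_on_eq_continuous_at)
  then show ?thesis by (simp add: continuous_at_imp_continuous_on)
qed

end

context cdata begin

lemma Iu_0: "Iu N \<tau> r 0 = 0"
  unfolding Iu_def
proof (rule sum.neutral, rule ballI)
  fix n assume n: "n \<in> {1..N}"
  have "0 \<le> brk \<tau> (n - 1)" using n by (intro brk_nonneg[OF tau]) auto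
  then have "lam \<tau> n 0 = 0" by (simp add: lam_def)
  then show "lam \<tau> n 0 *\<^sub>R r n = 0" by simp
qed

lemma U_0: "U 0 = uB0" using U_lt[of 0] T_pos Iu_0 by simp

lemma U_CS:
  assumes h0: "h 0 \<noteq> 0 \<Longrightarrow> uB0 $ j = 0" and hT: "h T \<noteq> 0 \<Longrightarrow> uBN $ j = 0"
    and hn: "\<And>n t. n \<in> {1..N} \<Longrightarrow> ur n $ j \<noteq> 0 \<Longrightarrow> brk \<tau> (n - 1) < t \<Longrightarrow> t < brk \<tau> n \<Longrightarrow> h t = 0"
  shows "AE t in interval_measure (ls_ext T (\<lambda>t. U t $ j)). t \<in> {0..T} \<longrightarrow> h t = 0"
proof -
  let ?f = "\<lambda>t. U t $ j"
  let ?M = "interval_measure (ls_ext T ?f)"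
  let ?g = "\<lambda>x. uB0 $ j + Iu N \<tau> ur x $ j"
  have f: "okf T ?f" by (rule U_okf)
  have g: "continuous_on {0..T} ?g" by (rule gcont)
  have fg_lt: "?f x = ?g x" if "0 \<le> x" "x < T" for x using U_lt[OF that] by simp
  define Z0 where "Z0 = (if h 0 \<noteq> 0 then {0::real} else {})"
  define ZT where "ZT = (if h T \<noteq> 0 then {T} else {})"
  define Zb where "Zb = (\<Union>n\<in>{n. n \<le> N \<and> 0 < brk \<tau> n \<and> brk \<tau> n < T}. {brk \<tau> n})"
  define Zi where "Zi = (\<Union>n\<in>{n. n \<in> {1..N} \<and> ur n $ j = 0}. {brk \<tau> (n - 1)<..<brk \<tau> n})"
  have n0: "Z0 \<in> null_sets ?M"
  proof (cases "h 0 \<noteq> 0")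
    case True
    then have "?f 0 = 0" using h0 U_0 by simp
    then show ?thesis using True okf_pt0[OF f] by (simp add: Z0_def null_sets_def)
  qed (simp add: Z0_def)
  have nT: "ZT \<in> null_sets ?M"
  proof (cases "h T \<noteq> 0")
    case True
    have "emeasure ?M {T} = 0"
    proof (rule okf_pt[OF f g T_pos order_refl])
      fix x assume "0 \<le> x" "x \<le> T"
      then show "?f x = ?g x" using fg_lt[of x] U_T hT True by (cases "x = T") auto
    qed
    then show ?thesis using True by (simp add: ZT_def null_sets_def)
  qed (simp add: ZT_def)
  have nb: "Zb \<in> null_sets ?M" unfolding Zb_def
  proof (rule null_sets_UN')
    show "countable {n. n \<le> N \<and> 0 < brk \<tau> n \<and> brk \<tau> n < T}" by (rule countable_finite) auto
    fix n assume n: "n \<in> {n. n \<le> N \<and> 0 < brk \<tau> n \<and> brk \<tau> n < T}"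
    have "emeasure ?M {brk \<tau> n} = 0"
      by (rule okf_pt[OF f g]) (use n fg_lt in auto)
    then show "{brk \<tau> n} \<in> null_sets ?M" by (simp add: null_sets_def)
  qed
  have ni: "Zi \<in> null_sets ?M" unfolding Zi_def
  proof (rule null_sets_UN')
    show "countable {n. n \<in> {1..N} \<and> ur n $ j = 0}" by (rule countable_finite) auto
    fix n assume n: "n \<in> {n. n \<in> {1..N} \<and> ur n $ j = 0}"
    have "emeasure ?M {brk \<tau> (n - 1)<..<brk \<tau> n} = 0"
    proof (rule okf_flat[OF f])
      fix x assume x: "brk \<tau> (n - 1) \<le> x" "x < brk \<tau> n"
      have bn: "brk \<tau> n \<le> T" using brk_mono[OF tau, of n N] n brkN by auto
      have "0 \<le> brk \<tau> (n - 1)" using n by (intro brk_nonneg[OF tau]) auto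
      have ex: "ls_ext T ?f y = uB0 $ j + (\<Sum>i\<in>{1..<n}. \<tau> i *\<^sub>R ur i) $ j"
        if y: "brk \<tau> (n - 1) \<le> y" "y < brk \<tau> n" for y
      proof -
        have "0 \<le> y" using y \<open>0 \<le> brk \<tau> (n - 1)\<close> by linarith
        moreover have "y < T" using y bn by linarith
        ultimately show ?thesis using U_piece[of n y] n y by (simp add: ls_ext_def)
      qed
      show "ls_ext T ?f x = ls_ext T ?f (brk \<tau> (n - 1))"
        using ex[of x] ex[of "brk \<tau> (n - 1)"] x by simp
    qed
    then show "{brk \<tau> (n - 1)<..<brk \<tau> n} \<in> null_sets ?M" by (simp add: null_sets_def)
  qed
  have nZ: "Z0 \<union> ZT \<union> Zb \<union> Zi \<in> null_sets ?M"
    using n0 nT nb ni by (intro null_sets.Un) auto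
  show ?thesis
  proof (rule AE_I'[OF nZ], rule subsetI)
    fix t assume ht: "t \<in> {t \<in> space ?M. \<not> (t \<in> {0..T} \<longrightarrow> h t = 0)}"
    then have t: "0 \<le> t" "t \<le> T" "h t \<noteq> 0" by auto
    show "t \<in> Z0 \<union> ZT \<union> Zb \<union> Zi"
    proof (cases "t = 0 \<or> t = T")
      case True then show ?thesis using t by (auto simp: Z0_def ZT_def)
    next
      case False
      then have t': "0 < t" "t < T" using t by auto
      obtain m where m: "m \<in> {1..N}" "brk \<tau> (m - 1) \<le> t" "t \<le> brk \<tau> m"
        using find_m[OF tau N_pos t(1)] t brkN by auto
      show ?thesis
      proof (cases "t = brk \<tau> (m - 1) \<or> t = brk \<tau> m")
        case True
        then obtain k where k: "k \<le> N" "t = brk \<tau> k" using m by (metis atLeastAtMost_iff diff_le_self le_trans)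
        then have "t \<in> Zb" using t' unfolding Zb_def by auto
        then show ?thesis by simp
      next
        case False
        then have inn: "brk \<tau> (m - 1) < t" "t < brk \<tau> m" using m by auto
        then have "ur m $ j = 0" using hn[OF m(1) _ inn] t by auto
        then have "t \<in> Zi" using m inn unfolding Zi_def by auto
        then show ?thesis by simp
      qed
    qed
  qed
qed

end

lemma rev_sum:
  fixes g :: "nat \<Rightarrow> 'a::comm_monoid_add"
  shows "m \<le> N \<Longrightarrow> (\<Sum>i\<in>{1..m}. g (N + 1 - i)) = (\<Sum>n\<in>{N + 1 - m..N}. g n)"
proof (induction m)
  case 0 then show ?case by simp
next
  case (Suc m)
  have "{N + 1 - Suc m..N} = insert (N - m) {N + 1 - m..N}" using Suc.prems by auto
  then have "(\<Sum>n\<in>{N + 1 - Suc m..N}. g n) = g (N - m) + (\<Sum>n\<in>{N + 1 - m..N}. g n)"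
    using Suc.prems by simp
  then show ?case using Suc by (simp add: add.commute)
qed

lemma rev_sum_all:
  fixes g :: "nat \<Rightarrow> 'a::comm_monoid_add"
  shows "(\<Sum>i\<in>{1..N}. g (N + 1 - i)) = (\<Sum>n\<in>{1..N}. g n)"
  using rev_sum[of N N g] by simp

lemma split_sum_at:
  fixes g :: "nat \<Rightarrow> 'a::comm_monoid_add"
  assumes "k \<le> N"
  shows "(\<Sum>n\<in>{1..N}. g n) = (\<Sum>n\<in>{1..k}. g n) + (\<Sum>n\<in>{k + 1..N}. g n)"
proof -
  have "{1..N} = {1..k} \<union> {k + 1..N}" using assms by auto
  then show ?thesis by (simp add: sum.union_disjoint)
qed

lemma brk_rev:
  assumes "m \<le> N"
  shows "brk (\<lambda>n. \<tau> (N + 1 - n)) m = brk \<tau> N - brk \<tau> (N - m)"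
proof -
  have "brk (\<lambda>n. \<tau> (N + 1 - n)) m = (\<Sum>n\<in>{N + 1 - m..N}. \<tau> n)"
    unfolding brk_def by (rule rev_sum[OF assms])
  moreover have "brk \<tau> N = brk \<tau> (N - m) + (\<Sum>n\<in>{N - m + 1..N}. \<tau> n)"
    unfolding brk_def by (rule split_sum_at) simp
  moreover have "N - m + 1 = N + 1 - m" using assms by simp
  ultimately show ?thesis by simp
qed

lemma state_rev:
  assumes "m \<le> N"
  shows "state_x qN (\<lambda>n. qd (N + 1 - n)) (\<lambda>n. \<tau> (N + 1 - n)) m = state_q N qN qd \<tau> (N - m)"
proof -
  have "(\<Sum>i\<in>{1..m}. \<tau> (N + 1 - i) *\<^sub>R qd (N + 1 - i)) = (\<Sum>n\<in>{N + 1 - m..N}. \<tau> n *\<^sub>R qd n)"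
    by (rule rev_sum[OF assms])
  moreover have "N - m + 1 = N + 1 - m" using assms by simp
  ultimately show ?thesis unfolding state_x_def state_q_def by simp
qed

lemma rate_p_rev:
  assumes tau: "\<forall>n\<in>{1..N}. 0 \<le> \<tau> n" and T: "brk \<tau> N = T"
  shows "rate_p T N \<tau> pr = rate_u N (\<lambda>n. \<tau> (N + 1 - n)) (\<lambda>n. pr (N + 1 - n))"
proof
  fix s
  have "rate_u N (\<lambda>n. \<tau> (N + 1 - n)) (\<lambda>n. pr (N + 1 - n)) s =
    (\<Sum>i\<in>{1..N}. indicator {T - brk \<tau> (N + 1 - i)<..<T - brk \<tau> (N + 1 - i - 1)} s *\<^sub>R pr (N + 1 - i))"
    unfolding rate_u_def
  proof (rule sum.cong[OF refl])
    fix i assume i: "i \<in> {1..N}"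
    have "brk (\<lambda>n. \<tau> (N + 1 - n)) (i - 1) = T - brk \<tau> (N + 1 - i)"
    proof -
      have h: "i - 1 \<le> N" using i by auto
      have "N - (i - 1) = N + 1 - i" using i by auto
      then show ?thesis using brk_rev[OF h, of \<tau>] T by simp
    qed
    moreover have "brk (\<lambda>n. \<tau> (N + 1 - n)) i = T - brk \<tau> (N + 1 - i - 1)"
      using brk_rev[of i N \<tau>] i T by simp
    ultimately show "indicator {brk (\<lambda>n. \<tau> (N + 1 - n)) (i - 1)<..<brk (\<lambda>n. \<tau> (N + 1 - n)) i} s *\<^sub>R pr (N + 1 - i) =
      indicator {T - brk \<tau> (N + 1 - i)<..<T - brk \<tau> (N + 1 - i - 1)} s *\<^sub>R pr (N + 1 - i)" by simp
  qed
  also have "\<dots> = rate_p T N \<tau> pr s"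
    unfolding rate_p_def
    by (rule rev_sum_all[where g="\<lambda>n. indicator {T - brk \<tau> n<..<T - brk \<tau> (n - 1)} s *\<^sub>R pr n"])
  finally show "rate_p T N \<tau> pr s = rate_u N (\<lambda>n. \<tau> (N + 1 - n)) (\<lambda>n. pr (N + 1 - n)) s" ..
qed

lemma constr_P_rev:
  assumes tau: "\<forall>n\<in>{1..N}. 0 \<le> \<tau> n" and T: "brk \<tau> N = T"
  shows "constr_P T N \<tau> pr pB0 pBN = constr_U T N (\<lambda>n. \<tau> (N + 1 - n)) (\<lambda>n. pr (N + 1 - n)) pBN pB0"
  unfolding constr_P_def constr_U_def rate_p_rev[OF assms] ..

lemma state_q_step: "n < N \<Longrightarrow> state_q N qN qd \<tau> n = state_q N qN qd \<tau> (Suc n) + \<tau> (Suc n) *\<^sub>R qd (Suc n)"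
proof -
  assume "n < N"
  then have "{n + 1..N} = insert (Suc n) {Suc n + 1..N}" by auto
  then show ?thesis unfolding state_q_def by (simp add: algebra_simps)
qed

lemma state_q_N: "state_q N qN qd \<tau> N = qN" by (simp add: state_q_def)

lemma state_x_0: "state_x x0 xd \<tau> 0 = x0" by (simp add: state_x_def)

lemma Q_zero:
  assumes compat2: "Js (N+1) \<subseteq> Js N" and qNc: "\<forall>j. j \<notin> Js (N+1) \<longrightarrow> qN $ j = 0"
    and dual_rates: "\<forall>n\<in>{1..N}. dual_basic_sol A c (Ks n) (Js n) (pr n) (qd n)"
    and eq_a_q: "\<forall>n\<in>{1..<N}. \<forall>j. Inl j \<in> basic_vars (Ks n) (Js n) - basic_vars (Ks (n+1)) (Js (n+1))
                   \<longrightarrow> state_q N qN qd \<tau> n $ j = 0"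
    and n: "1 \<le> n" "n \<le> N" and j: "j \<notin> Js n"
  shows "state_q N qN qd \<tau> n $ j = 0"
proof -
  have "\<forall>j. j \<notin> Js n \<longrightarrow> state_q N qN qd \<tau> n $ j = 0" using n(2)
  proof (induction rule: inc_induct)
    case base show ?case using compat2 qNc by (auto simp: state_q_N)
  next
    case (step m)
    show ?case
    proof (intro allI impI)
      fix j assume j: "j \<notin> Js m"
      have m: "m \<in> {1..<N}" using step n(1) by auto
      show "state_q N qN qd \<tau> m $ j = 0"
      proof (cases "j \<in> Js (Suc m)")
        case True
        then have "Inl j \<in> basic_vars (Ks m) (Js m) - basic_vars (Ks (m+1)) (Js (m+1))"
          using j by (auto simp: basic_vars_def)
        then show ?thesis using eq_a_q m by auto
      next
        case False
        then have "state_q N qN qd \<tau> (Suc m) $ j = 0" using step.IH by auto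
        moreover have "qd (Suc m) $ j = 0" using dual_rates False m by (auto simp: dual_basic_sol_def)
        ultimately show ?thesis using state_q_step[of m N qN qd \<tau>] m by simp
      qed
    qed
  qed
  then show ?thesis using j by auto
qed

lemma X_zero:
  assumes compat1: "Ks 0 \<subseteq> Ks 1" and x0c: "\<forall>k. k \<notin> Ks 0 \<longrightarrow> x0 $ k = 0"
    and primal_rates: "\<forall>n\<in>{1..N}. primal_basic_sol A b (Ks n) (Js n) (ur n) (xd n)"
    and eq_a_x: "\<forall>n\<in>{1..<N}. \<forall>k. Inr k \<in> basic_vars (Ks n) (Js n) - basic_vars (Ks (n+1)) (Js (n+1))
                   \<longrightarrow> state_x x0 xd \<tau> n $ k = 0"
    and n: "1 \<le> n" "n \<le> N" and k: "k \<notin> Ks n"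
  shows "state_x x0 xd \<tau> (n - 1) $ k = 0"
proof -
  have "\<forall>k. k \<notin> Ks n \<longrightarrow> state_x x0 xd \<tau> (n - 1) $ k = 0" using n(1) n(2)
  proof (induction rule: dec_induct)
    case base show ?case using compat1 x0c by (auto simp: state_x_0)
  next
    case (step m)
    show ?case
    proof (intro allI impI)
      fix k assume k: "k \<notin> Ks (Suc m)"
      have m: "m \<in> {1..<N}" using step by auto
      show "state_x x0 xd \<tau> (Suc m - 1) $ k = 0"
      proof (cases "k \<in> Ks m")
        case True
        then have "Inr k \<in> basic_vars (Ks m) (Js m) - basic_vars (Ks (m+1)) (Js (m+1))"
          using k by (auto simp: basic_vars_def)
        then show ?thesis using eq_a_x m by auto
      next
        case False
        then have "state_x x0 xd \<tau> (m - 1) $ k = 0" using step by auto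
        moreover have "xd m $ k = 0" using primal_rates False m by (auto simp: primal_basic_sol_def)
        ultimately show ?thesis using state_x_Suc[of m x0 xd \<tau>] m by simp
      qed
    qed
  qed
  then show ?thesis using k by auto
qed

theorem mainTheorem1:
  fixes A :: "real^'j^'k" and \<beta> b :: "real^'k" and \<gamma> c :: "real^'j" and T :: real
    and N :: nat and Ks :: "nat \<Rightarrow> 'k set" and Js :: "nat \<Rightarrow> 'j set"
    and ur :: "nat \<Rightarrow> real^'j" and xd :: "nat \<Rightarrow> real^'k"
    and pr :: "nat \<Rightarrow> real^'k" and qd :: "nat \<Rightarrow> real^'j"
    and uB0 uBN qN qB0 :: "real^'j" and x0 xBN pB0 pBN :: "real^'k"
    and \<tau> :: "nat \<Rightarrow> real"
  assumes T_pos: "0 < T"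
    and nondeg: "nondeg_I A b c"
    \<comment> \<open>base sequence\<close>
    and N_pos: "1 \<le> N"
    and bases: "\<forall>n\<in>{1..N}. is_basis A (Ks n) (Js n)"
    and primal_rates: "\<forall>n\<in>{1..N}. primal_basic_sol A b (Ks n) (Js n) (ur n) (xd n)"
    and dual_rates: "\<forall>n\<in>{1..N}. dual_basic_sol A c (Ks n) (Js n) (pr n) (qd n)"
    and admissible: "\<forall>n\<in>{1..N}. 0 \<le> ur n \<and> 0 \<le> pr n"
    and adj: "\<forall>n\<in>{1..<N}. adjacent (Ks n) (Js n) (Ks (n+1)) (Js (n+1))"
    and compat: "Ks 0 \<subseteq> Ks 1" "Js (N+1) \<subseteq> Js N"
    \<comment> \<open>(a): leaving variable v_n\<close>
    and eq_a_x: "\<forall>n\<in>{1..<N}. \<forall>k. Inr k \<in> basic_vars (Ks n) (Js n) - basic_vars (Ks (n+1)) (Js (n+1))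
                   \<longrightarrow> state_x x0 xd \<tau> n $ k = 0"
    and eq_a_q: "\<forall>n\<in>{1..<N}. \<forall>j. Inl j \<in> basic_vars (Ks n) (Js n) - basic_vars (Ks (n+1)) (Js (n+1))
                   \<longrightarrow> state_q N qN qd \<tau> n $ j = 0"
    \<comment> \<open>(b)\<close>
    and eq_b: "(\<Sum>n\<in>{1..N}. \<tau> n) = T"
    \<comment> \<open>(c)\<close>
    and eq_c: "\<forall>j\<in>Js 0. uB0 $ j = 0" "\<forall>k. k \<notin> Ks 0 \<longrightarrow> x0 $ k = 0"
              "\<forall>k\<in>Ks 0. pB0 $ k = 0" "\<forall>j. j \<notin> Js 0 \<longrightarrow> qB0 $ j = 0"
              "\<forall>k\<in>Ks (N+1). pBN $ k = 0" "\<forall>j. j \<notin> Js (N+1) \<longrightarrow> qN $ j = 0"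
              "\<forall>j\<in>Js (N+1). uBN $ j = 0" "\<forall>k. k \<notin> Ks (N+1) \<longrightarrow> xBN $ k = 0"
    \<comment> \<open>(d)\<close>
    and eq_d: "A *v uB0 + x0 = \<beta>" "transpose A *v pBN - qN = \<gamma>"
    \<comment> \<open>(e)\<close>
    and eq_e: "A *v uBN + xBN - state_x x0 xd \<tau> N = 0"
              "transpose A *v pB0 - qB0 + state_q N qN qd \<tau> 0 = 0"
    \<comment> \<open>nonnegativity\<close>
    and nonneg_bd: "0 \<le> uB0" "0 \<le> uBN" "0 \<le> x0" "0 \<le> xBN"
                   "0 \<le> pB0" "0 \<le> pBN" "0 \<le> qN" "0 \<le> qB0"
    and nonneg_tau: "\<forall>n\<in>{1..N}. 0 \<le> \<tau> n"
    and nonneg_states: "\<forall>n\<in>{0..N}. 0 \<le> state_x x0 xd \<tau> n \<and> 0 \<le> state_q N qN qd \<tau> n"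
  shows "mclp_optimal A \<beta> b \<gamma> c T (constr_U T N \<tau> ur uB0 uBN) \<and>
         mclp_dual_optimal A \<beta> b \<gamma> c T (constr_P T N \<tau> pr pB0 pBN)"
proof -
  have T0: "0 \<le> T" using T_pos by simp
  have tau: "\<forall>n\<in>{1..N}. 0 \<le> \<tau> n" by (rule nonneg_tau)
  have brkN: "brk \<tau> N = T" using eq_b by (simp add: brk_def)
  define \<tau>' where "\<tau>' = (\<lambda>n. \<tau> (N + 1 - n))"
  define pr' where "pr' = (\<lambda>n. pr (N + 1 - n))"
  define qd' where "qd' = (\<lambda>n. qd (N + 1 - n))"
  have rev_in: "N + 1 - n \<in> {1..N}" if "n \<in> {1..N}" for n using that by auto
  have Pr: "cdata A \<beta> b T N \<tau> ur xd uB0 uBN x0 xBN"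
  proof (rule cdata.intro)
    show "A *v uBN + xBN = state_x x0 xd \<tau> N" using eq_e(1) by (metis eq_iff_diff_eq_0)
    show "\<forall>n\<in>{1..N}. A *v ur n + xd n = b" using primal_rates by (auto simp: primal_basic_sol_def)
  qed (use T_pos N_pos tau eq_b admissible eq_d nonneg_bd nonneg_states in auto)
  have sq0: "state_q N qN qd \<tau> 0 = qB0 - transpose A *v pB0" using eq_e(2) by (simp add: algebra_simps eq_neg_iff_add_eq_0)
  have Du: "cdata (- transpose A) (- \<gamma>) (- c) T N \<tau>' pr' qd' pBN pB0 qN qB0"
  proof (rule cdata.intro)
    show "\<forall>n\<in>{1..N}. 0 \<le> \<tau>' n" using tau rev_in by (auto simp: \<tau>'_def)
    show "(\<Sum>n\<in>{1..N}. \<tau>' n) = T" unfolding \<tau>'_def using rev_sum_all[of \<tau> N] eq_b by simp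
    show "\<forall>n\<in>{1..N}. (- transpose A) *v pr' n + qd' n = - c"
    proof
      fix n assume n: "n \<in> {1..N}"
      have "transpose A *v pr (N + 1 - n) - qd (N + 1 - n) = c"
        using dual_rates rev_in[OF n] by (auto simp: dual_basic_sol_def)
      then show "(- transpose A) *v pr' n + qd' n = - c"
        unfolding pr'_def qd'_def neg_mv by (simp add: algebra_simps)
    qed
    show "\<forall>n\<in>{1..N}. 0 \<le> pr' n" using admissible rev_in by (auto simp: pr'_def)
    show "(- transpose A) *v pBN + qN = - \<gamma>" using eq_d(2) unfolding neg_mv by (simp add: algebra_simps)
    show "(- transpose A) *v pB0 + qB0 = state_x qN qd' \<tau>' N"
      unfolding qd'_def \<tau>'_def state_rev[OF order_refl] neg_mv using sq0 by simp
    show "\<forall>n\<in>{0..N}. 0 \<le> state_x qN qd' \<tau>' n"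
    proof
      fix n assume n: "n \<in> {0..N}"
      then have "state_x qN qd' \<tau>' n = state_q N qN qd \<tau> (N - n)"
        unfolding qd'_def \<tau>'_def by (intro state_rev) auto
      then show "0 \<le> state_x qN qd' \<tau>' n" using nonneg_states n by auto
    qed
  qed (use T_pos N_pos nonneg_bd in auto)
  let ?U = "constr_U T N \<tau> ur uB0 uBN"
  let ?P = "constr_P T N \<tau> pr pB0 pBN"
  have Peq: "?P = constr_U T N \<tau>' pr' pBN pB0"
    unfolding \<tau>'_def pr'_def by (rule constr_P_rev[OF tau brkN])
  have Uf: "mclp_feasible A \<beta> b T ?U" by (rule cdata.U_feasible[OF Pr])
  have Pf': "mclp_feasible (- transpose A) (- \<gamma>) (- c) T ?P" unfolding Peq by (rule cdata.U_feasible[OF Du])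
  have Pf: "mclp_dual_feasible A \<gamma> c T ?P" using Pf' by (simp add: dual_feas_iff)
  have Uf': "mclp_dual_feasible (- transpose A) (- \<beta>) (- b) T ?U" using Uf by (simp add: feas_iff_dual)
  have AE1: "\<And>j. AE t in interval_measure (ls_ext T (\<lambda>t. ?U t $ j)).
          t \<in> {0..T} \<longrightarrow> (transpose A *v ?P (T - t)) $ j = \<gamma> $ j + (T - t) * c $ j"
  proof -
    fix j
    define h where "h = (\<lambda>t. (transpose A *v ?P (T - t)) $ j - (\<gamma> $ j + (T - t) * c $ j))"
    have DS: "(transpose A *v ?P s) $ j - (\<gamma> $ j + s * c $ j) =
        ((- \<gamma>) + s *\<^sub>R (- c) - (- transpose A) *v constr_U T N \<tau>' pr' pBN pB0 s) $ j" for s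
      unfolding Peq neg_mv by simp
    have "AE t in interval_measure (ls_ext T (\<lambda>t. ?U t $ j)). t \<in> {0..T} \<longrightarrow> h t = 0"
    proof (rule cdata.U_CS[OF Pr])
      have "h 0 = (transpose A *v ?P T) $ j - (\<gamma> $ j + T * c $ j)" unfolding h_def by simp
      also have "\<dots> = ((- \<gamma>) + T *\<^sub>R (- c) - (- transpose A) *v constr_U T N \<tau>' pr' pBN pB0 T) $ j"
        by (rule DS)
      also have "\<dots> = qB0 $ j" by (rule arg_cong[where f="\<lambda>v. v $ j", OF cdata.slack_T[OF Du]])
      finally have "h 0 = qB0 $ j" .
      then show "h 0 \<noteq> 0 \<Longrightarrow> uB0 $ j = 0" using eq_c(1,4) by auto
      have "h T = qN $ j" unfolding h_def using DS[of 0] cdata.U_0[OF Du] eq_d(2)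
        by (simp add: neg_mv algebra_simps)
      then show "h T \<noteq> 0 \<Longrightarrow> uBN $ j = 0" using eq_c(6,7) by auto
    next
      fix n t assume n: "n \<in> {1..N}" and u: "ur n $ j \<noteq> 0" and t: "brk \<tau> (n - 1) < t" "t < brk \<tau> n"
      have jn: "j \<notin> Js n" using u primal_rates n by (auto simp: primal_basic_sol_def)
      define m where "m = N + 1 - n"
      have m: "m \<in> {1..N}" "m - 1 = N - n" "N - (m - 1) = n" "N - m = n - 1" using n by (auto simp: m_def)
      have b1: "brk \<tau>' (m - 1) = T - brk \<tau> n" unfolding \<tau>'_def using brk_rev[of "m - 1" N \<tau>] m brkN by simp
      have b2: "brk \<tau>' m = T - brk \<tau> (n - 1)" unfolding \<tau>'_def using brk_rev[of m N \<tau>] m brkN by simp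
      have "0 \<le> brk \<tau> (n - 1)" using n by (intro brk_nonneg[OF tau]) auto
      then have s: "brk \<tau>' (m - 1) \<le> T - t" "T - t \<le> brk \<tau>' m" "T - t < T" using t b1 b2 by auto
      have sp: "(- \<gamma>) + (T - t) *\<^sub>R (- c) - (- transpose A) *v constr_U T N \<tau>' pr' pBN pB0 (T - t) =
          state_x qN qd' \<tau>' (m - 1) + ((T - t) - brk \<tau>' (m - 1)) *\<^sub>R qd' m"
        by (rule cdata.slack_piece[OF Du m(1) s])
      have "state_x qN qd' \<tau>' (m - 1) = state_q N qN qd \<tau> n"
        unfolding qd'_def \<tau>'_def using state_rev[of "m - 1" N qN qd \<tau>] m by simp
      moreover have "qd' m = qd n" unfolding qd'_def m_def using n by simp
      moreover have "state_q N qN qd \<tau> n $ j = 0"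
        using Q_zero[OF compat(2) _ dual_rates eq_a_q _ _ jn] eq_c(6) n by auto
      moreover have "qd n $ j = 0" using dual_rates jn n by (auto simp: dual_basic_sol_def)
      ultimately have z: "(state_x qN qd' \<tau>' (m - 1) + ((T - t) - brk \<tau>' (m - 1)) *\<^sub>R qd' m) $ j = 0"
        by simp
      have "h t = ((- \<gamma>) + (T - t) *\<^sub>R (- c) - (- transpose A) *v constr_U T N \<tau>' pr' pBN pB0 (T - t)) $ j"
        unfolding h_def by (rule DS)
      also have "\<dots> = (state_x qN qd' \<tau>' (m - 1) + ((T - t) - brk \<tau>' (m - 1)) *\<^sub>R qd' m) $ j"
        by (rule arg_cong[where f="\<lambda>v. v $ j", OF sp])
      finally show "h t = 0" using z by simp
    qed
    then show "AE t in interval_measure (ls_ext T (\<lambda>t. ?U t $ j)).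
          t \<in> {0..T} \<longrightarrow> (transpose A *v ?P (T - t)) $ j = \<gamma> $ j + (T - t) * c $ j"
      by eventually_elim (auto simp: h_def)
  qed
  have AE2: "\<And>k. AE s in interval_measure (ls_ext T (\<lambda>t. ?P t $ k)).
          s \<in> {0..T} \<longrightarrow> (transpose (- transpose A) *v ?U (T - s)) $ k = (- \<beta>) $ k + (T - s) * (- b) $ k"
  proof -
    fix k
    define h where "h = (\<lambda>s. (transpose (- transpose A) *v ?U (T - s)) $ k - ((- \<beta>) $ k + (T - s) * (- b) $ k))"
    have PS: "(transpose (- transpose A) *v ?U t) $ k - ((- \<beta>) $ k + t * (- b) $ k) = (\<beta> + t *\<^sub>R b - A *v ?U t) $ k" for t
      by (simp add: transpose_neg transpose_transpose' neg_mv)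
    have "AE s in interval_measure (ls_ext T (\<lambda>t. constr_U T N \<tau>' pr' pBN pB0 t $ k)). s \<in> {0..T} \<longrightarrow> h s = 0"
    proof (rule cdata.U_CS[OF Du])
      have "h 0 = xBN $ k" unfolding h_def using PS[of T] cdata.slack_T[OF Pr] by simp
      then show "h 0 \<noteq> 0 \<Longrightarrow> pBN $ k = 0" using eq_c(5,8) by auto
      have bx: "\<beta> - A *v uB0 = x0" using eq_d(1) by (metis add_diff_cancel_left')
      have "h T = (\<beta> + (T - T) *\<^sub>R b - A *v ?U (T - T)) $ k" unfolding h_def by (rule PS)
      also have "\<dots> = (\<beta> - A *v uB0) $ k" using cdata.U_0[OF Pr] by simp
      also have "\<dots> = x0 $ k" using bx by simp
      finally have "h T = x0 $ k" .
      then show "h T \<noteq> 0 \<Longrightarrow> pB0 $ k = 0" using eq_c(2,3) by auto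
    next
      fix m s assume m: "m \<in> {1..N}" and u: "pr' m $ k \<noteq> 0"
        and s: "brk \<tau>' (m - 1) < s" "s < brk \<tau>' m"
      define n where "n = N + 1 - m"
      have n: "n \<in> {1..N}" "m - 1 = N - n" "N - (m - 1) = n" "N - m = n - 1" using m by (auto simp: n_def)
      have "pr n $ k \<noteq> 0" using u unfolding pr'_def n_def by simp
      then have kn: "k \<notin> Ks n" using dual_rates n by (auto simp: dual_basic_sol_def)
      have b1: "brk \<tau>' (m - 1) = T - brk \<tau> n" unfolding \<tau>'_def using brk_rev[of "m - 1" N \<tau>] n m brkN by simp
      have b2: "brk \<tau>' m = T - brk \<tau> (n - 1)" unfolding \<tau>'_def using brk_rev[of m N \<tau>] n m brkN by simp
      have "brk \<tau> n \<le> T" using brk_mono[OF tau, of n N] n brkN by auto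
      then have t: "brk \<tau> (n - 1) \<le> T - s" "T - s \<le> brk \<tau> n" "T - s < T" using s b1 b2 by auto
      have sp: "\<beta> + (T - s) *\<^sub>R b - A *v ?U (T - s) = state_x x0 xd \<tau> (n - 1) + ((T - s) - brk \<tau> (n - 1)) *\<^sub>R xd n"
        by (rule cdata.slack_piece[OF Pr n(1) t])
      have "state_x x0 xd \<tau> (n - 1) $ k = 0"
        using X_zero[OF compat(1) _ primal_rates eq_a_x _ _ kn] eq_c(2) n by auto
      moreover have "xd n $ k = 0" using primal_rates kn n by (auto simp: primal_basic_sol_def)
      ultimately show "h s = 0" unfolding h_def using PS[of "T - s"] sp by simp
    qed
    then show "AE s in interval_measure (ls_ext T (\<lambda>t. ?P t $ k)).
          s \<in> {0..T} \<longrightarrow> (transpose (- transpose A) *v ?U (T - s)) $ k = (- \<beta>) $ k + (T - s) * (- b) $ k"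
      unfolding Peq by eventually_elim (auto simp: h_def)
  qed
  have E1: "mclp_obj \<gamma> c T ?U = Wf A T ?U ?P" by (rule WD_eq[OF Uf Pf T0 AE1])
  have E2: "mclp_obj (- \<beta>) (- b) T ?P = Wf (- transpose A) T ?P ?U" by (rule WD_eq[OF Pf' Uf' T0 AE2])
  have E: "mclp_obj \<gamma> c T ?U = mclp_dual_obj \<beta> b T ?P"
    using E1 E2 obj_neg[of \<beta> b T ?P] Wf_neg[OF Uf Pf T0] by simp
  have w1: "mclp_obj \<gamma> c T U' \<le> mclp_obj \<gamma> c T ?U" if "mclp_feasible A \<beta> b T U'" for U'
    using weak_duality[OF that Pf T0] E by simp
  have w2: "mclp_dual_obj \<beta> b T ?P \<le> mclp_dual_obj \<beta> b T P'" if "mclp_dual_feasible A \<gamma> c T P'" for P'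
    using weak_duality[OF Uf that T0] E by simp
  show ?thesis
    unfolding mclp_optimal_def mclp_dual_optimal_def
    using Uf Pf w1 w2 by blast
qed

end
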